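(* Fix $\gamma\in[0,1)$, $R_{\max}>0$ and $K\ge1$, and let $\tau_k=\frac{2k-1}{2K}$. For every MDP with discount factor $\gamma$ whose reward distributions are all supported on $[-R_{\max},R_{\max}]$ and every policy $\pi$, let $\eta$ be the QDRL fixed point, i.e. the collection of distributions of the form $\eta(x,a)=\frac1K\sum_{k=1}^K\delta_{z_k(x,a)}$ satisfying $\eta=\Pi_{W_1}\mathcal T^\pi\eta$, and let $\hat s_k(x,a)=F^{-1}_{\eta(x,a)}(\tau_k)$ be the learnt quantile statistics. Then $$\sup_{(x,a)\in\mathcal X\times\mathcal A}\frac1K\sum_{k=1}^K\big|F^{-1}_{\eta^\pi(x,a)}(\tau_k)-\hat s_k(x,a)\big|\le\frac{2R_{\max}(5-2\gamma)}{(1-\gamma)^2K}.$$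
   Context: MDP setting: finite state space $\mathcal X$, finite action space $\mathcal A$, transition kernel $p$, discount $\gamma$, reward distributions $\mathcal R(\cdot\mid x,a)$; policy $\pi:\mathcal X\to\mathscr P(\mathcal A)$; $\eta^\pi(x,a)$ is the law of the return $\sum_t\gamma^tR_t$ from $X_0=x,A_0=a$ with $R_t\sim\mathcal R(\cdot\mid X_t,A_t)$, $X_{t+1}\sim p(\cdot\mid X_t,A_t)$, $A_{t+1}\sim\pi(\cdot\mid X_{t+1})$. Distributional Bellman operator: $(\mathcal T^\pi\eta)(x,a)=\sum_{x',a'}p(x'\mid x,a)\pi(a'\mid x')\int\mathcal R(\mathrm dr\mid x,a)(f_{r,\gamma})_\#\eta(x',a')$ with $f_{r,\gamma}(z)=r+\gamma z$. For a distribution $\mu$ with CDF $F_\mu$, $F_\mu^{-1}(\tau)=\inf\{z:F_\mu(z)\ge\tau\}$, and $\Pi_{W_1}(\mu)=\frac1K\sum_{k=1}^K\delta_{F_\mu^{-1}(\tau_k)}$, applied statewise to collections. *)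

theory Defs
  imports "HOL-Probability.Probability"
begin

text \<open>Distributions on the reals are represented as measures with sets = sets borel.\<close>

definition tau :: "nat \<Rightarrow> nat \<Rightarrow> real" where
  "tau K k = (2 * real k - 1) / (2 * real K)"

definition quantile :: "real measure \<Rightarrow> real \<Rightarrow> real" where
  "quantile \<mu> t = Inf {z. t \<le> cdf \<mu> z}"

definition dist_bellman ::
  "real \<Rightarrow> ('s \<Rightarrow> 'a \<Rightarrow> 's pmf) \<Rightarrow> ('s \<Rightarrow> 'a pmf) \<Rightarrow> ('s \<Rightarrow> 'a \<Rightarrow> real measure)
   \<Rightarrow> ('s \<Rightarrow> 'a \<Rightarrow> real measure) \<Rightarrow> 's \<Rightarrow> 'a \<Rightarrow> real measure" where
  "dist_bellman \<gamma> p \<pi> R \<eta> x a =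
     measure_pmf (p x a) \<bind> (\<lambda>x'. measure_pmf (\<pi> x') \<bind> (\<lambda>a'.
       R x a \<bind> (\<lambda>r. distr (\<eta> x' a') borel (\<lambda>z. r + \<gamma> * z))))"

definition unif_dirac :: "nat \<Rightarrow> (nat \<Rightarrow> real) \<Rightarrow> real measure" where
  "unif_dirac K w = distr (measure_pmf (pmf_of_set {1..K})) borel w"

definition proj_W1 :: "nat \<Rightarrow> real measure \<Rightarrow> real measure" where
  "proj_W1 K \<mu> = unif_dirac K (\<lambda>k. quantile \<mu> (tau K k))"

text \<open>Law of the truncated return sum_{t<n} gamma^t R_t from X_0 = x, A_0 = a:
  sample R_0 ~ R(x,a), X_1 ~ p(x,a), A_1 ~ pi(X_1), then continue from (X_1,A_1).\<close>
primrec horizon_return ::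
  "real \<Rightarrow> ('s \<Rightarrow> 'a \<Rightarrow> 's pmf) \<Rightarrow> ('s \<Rightarrow> 'a pmf) \<Rightarrow> ('s \<Rightarrow> 'a \<Rightarrow> real measure)
   \<Rightarrow> nat \<Rightarrow> 's \<Rightarrow> 'a \<Rightarrow> real measure" where
  "horizon_return \<gamma> p \<pi> R 0 x a = return borel 0"
| "horizon_return \<gamma> p \<pi> R (Suc n) x a =
     measure_pmf (p x a) \<bind> (\<lambda>x'. measure_pmf (\<pi> x') \<bind> (\<lambda>a'.
       R x a \<bind> (\<lambda>r. distr (horizon_return \<gamma> p \<pi> R n x' a') borel (\<lambda>z. r + \<gamma> * z))))"

text \<open>Law eta^pi(x,a) of the full return sum_t gamma^t R_t: the (weak) limit of the laws
  of the partial sums (which converge a.s. since rewards are bounded and gamma < 1).\<close>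
definition return_dist ::
  "real \<Rightarrow> ('s \<Rightarrow> 'a \<Rightarrow> 's pmf) \<Rightarrow> ('s \<Rightarrow> 'a pmf) \<Rightarrow> ('s \<Rightarrow> 'a \<Rightarrow> real measure)
   \<Rightarrow> 's \<Rightarrow> 'a \<Rightarrow> real measure" where
  "return_dist \<gamma> p \<pi> R x a =
     (THE \<mu>. real_distribution \<mu> \<and> weak_conv_m (\<lambda>n. horizon_return \<gamma> p \<pi> R n x a) \<mu>)"

end

theory Submission
  imports Defs
begin


definition Dw :: "real measure \<Rightarrow> real measure \<Rightarrow> ennreal" where
  "Dw \<mu> \<nu> = (\<integral>\<^sup>+t. ennreal \<bar>cdf \<mu> t - cdf \<nu> t\<bar> \<partial>lborel)"

definition bnd :: "real \<Rightarrow> real measure \<Rightarrow> bool" where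
  "bnd B \<mu> \<longleftrightarrow> real_distribution \<mu> \<and> (\<forall>t. t < -B \<longrightarrow> cdf \<mu> t = 0) \<and> (\<forall>t. B \<le> t \<longrightarrow> cdf \<mu> t = 1)"

lemma cdf_mono: "real_distribution \<mu> \<Longrightarrow> x \<le> y \<Longrightarrow> cdf \<mu> x \<le> cdf \<mu> y"
  using finite_borel_measure.cdf_nondecreasing[OF real_distribution.finite_borel_measure_M] by blast

lemma cdf_nonneg': "real_distribution \<mu> \<Longrightarrow> 0 \<le> cdf \<mu> x"
  using finite_borel_measure.cdf_nonneg[OF real_distribution.finite_borel_measure_M] by blast

lemma cdf_le1: "real_distribution \<mu> \<Longrightarrow> cdf \<mu> x \<le> 1"
  using real_distribution.cdf_bounded_prob by blast

lemma cdf_meas[measurable]: "real_distribution \<mu> \<Longrightarrow> cdf \<mu> \<in> borel_measurable borel"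
  by (rule borel_measurable_mono) (simp add: mono_def cdf_mono)

lemma Dw_tri:
  assumes "real_distribution \<mu>" "real_distribution \<nu>" "real_distribution \<rho>"
  shows "Dw \<mu> \<nu> \<le> Dw \<mu> \<rho> + Dw \<rho> \<nu>"
  unfolding Dw_def
proof (subst nn_integral_add[symmetric])
  show "(\<lambda>t. ennreal \<bar>cdf \<mu> t - cdf \<rho> t\<bar>) \<in> borel_measurable lborel"
    using assms by measurable
  show "(\<lambda>t. ennreal \<bar>cdf \<rho> t - cdf \<nu> t\<bar>) \<in> borel_measurable lborel"
    using assms by measurable
  show "(\<integral>\<^sup>+ t. ennreal \<bar>cdf \<mu> t - cdf \<nu> t\<bar> \<partial>lborel)
    \<le> (\<integral>\<^sup>+ t. ennreal \<bar>cdf \<mu> t - cdf \<rho> t\<bar> + ennreal \<bar>cdf \<rho> t - cdf \<nu> t\<bar> \<partial>lborel)"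
    by (rule nn_integral_mono) (simp add: ennreal_plus[symmetric] del: ennreal_plus)
qed

lemma Dw_le_box:
  assumes "\<And>t. \<bar>cdf \<mu> t - cdf \<nu> t\<bar> \<le> (if -B \<le> t \<and> t < B then c else 0)" "0 \<le> c" "0 \<le> B"
  shows "Dw \<mu> \<nu> \<le> ennreal (2 * B * c)"
proof -
  have "Dw \<mu> \<nu> \<le> (\<integral>\<^sup>+t. ennreal c * indicator {-B..<B} t \<partial>lborel)"
    unfolding Dw_def
  proof (rule nn_integral_mono)
    fix t :: real
    show "ennreal \<bar>cdf \<mu> t - cdf \<nu> t\<bar> \<le> ennreal c * indicator {-B..<B} t"
      using assms(1)[of t] by (cases "-B \<le> t \<and> t < B") (auto simp: indicator_def intro!: ennreal_leI)
  qed
  also have "\<dots> = ennreal c * ennreal (2 * B)"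
    using assms by (subst nn_integral_cmult_indicator) auto
  finally show ?thesis using assms by (simp add: ennreal_mult[symmetric] mult.commute mult.left_commute)
qed

lemma bnd_box:
  assumes "bnd B \<mu>" "bnd B \<nu>"
  shows "\<bar>cdf \<mu> t - cdf \<nu> t\<bar> \<le> (if -B \<le> t \<and> t < B then 1 else 0)"
proof -
  have r: "real_distribution \<mu>" "real_distribution \<nu>" using assms unfolding bnd_def by auto
  show ?thesis
  using assms cdf_le1[OF r(1), of t] cdf_le1[OF r(2), of t] cdf_nonneg'[OF r(1), of t] cdf_nonneg'[OF r(2), of t]
  unfolding bnd_def by (auto simp: not_le not_less abs_le_iff)
qed

lemma Dw_bnd: "bnd B \<mu> \<Longrightarrow> bnd B \<nu> \<Longrightarrow> 0 \<le> B \<Longrightarrow> Dw \<mu> \<nu> \<le> ennreal (2 * B)"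
  using Dw_le_box[of \<mu> \<nu> B 1] bnd_box[of B \<mu> \<nu>] by simp

lemma real_distribution_unif: "real_distribution (unif_dirac K w)"
  unfolding unif_dirac_def
  by (rule prob_space.real_distribution_distr) (auto simp: prob_space_measure_pmf)

lemma measure_unif:
  assumes "K \<ge> 1" "A \<in> sets borel"
  shows "measure (unif_dirac K w) A = card {k\<in>{1..K}. w k \<in> A} / K"
proof -
  have ne: "{1..K} \<noteq> {}" using assms by auto
  have "measure (unif_dirac K w) A = measure (measure_pmf (pmf_of_set {1..K})) (w -` A)"
    unfolding unif_dirac_def using assms by (subst measure_distr) auto
  also have "\<dots> = card ({1..K} \<inter> w -` A) / card {1..K}"
    using ne by (subst measure_pmf_of_set) auto
  also have "{1..K} \<inter> w -` A = {k\<in>{1..K}. w k \<in> A}" by auto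
  finally show ?thesis by simp
qed

lemma cdf_unif:
  assumes "K \<ge> 1"
  shows "cdf (unif_dirac K w) t = card {k\<in>{1..K}. w k \<le> t} / K"
  unfolding cdf_def using measure_unif[OF assms, of "{..t}" w] by simp

lemma quantile_galois:
  assumes "real_distribution \<mu>" "0 < \<tau>" "\<tau> < 1"
  shows "\<tau> \<le> cdf \<mu> x \<longleftrightarrow> quantile \<mu> \<tau> \<le> x"
proof -
  interpret right_continuous_mono "cdf \<mu>" 0 1
    by standard (use assms(1) in \<open>auto simp: mono_def cdf_mono
      real_distribution.cdf_lim_at_top_prob finite_borel_measure.cdf_lim_at_bot
      finite_borel_measure.cdf_is_right_cont real_distribution.finite_borel_measure_M\<close>)
  show ?thesis unfolding quantile_def by (rule pseudoinverse) (use assms in auto)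
qed


lemma rd_iff: "real_distribution M \<longleftrightarrow> M \<in> space (prob_algebra borel)"
  by (auto simp: space_prob_algebra real_distribution_def real_distribution_axioms_def)

lemma inner_prob:
  assumes "real_distribution \<eta>"
  shows "prob_space (distr \<eta> borel (\<lambda>z. r + \<gamma> * z))"
proof -
  have s: "sets \<eta> = sets borel" using assms(1) by (simp add: real_distribution.events_eq_borel)
  have "(\<lambda>z. r + \<gamma> * z) \<in> borel_measurable \<eta>"
    by (subst measurable_cong_sets[OF s refl]) simp
  then show ?thesis
    using assms(1) by (intro prob_space.prob_space_distr) (auto simp: real_distribution_def)
qed

lemma inner_kernel:
  assumes "real_distribution \<eta>" "real_distribution Rm"
  shows "(\<lambda>r. distr \<eta> borel (\<lambda>z. r + \<gamma> * z)) \<in> Rm \<rightarrow>\<^sub>M prob_algebra borel"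
proof (rule measurable_prob_algebraI)
  show "prob_space (distr \<eta> borel (\<lambda>z. r + \<gamma> * z))" for r
  proof -
    have s: "sets \<eta> = sets borel" using assms(1) by (simp add: real_distribution.events_eq_borel)
    have "(\<lambda>z. r + \<gamma> * z) \<in> borel_measurable \<eta>"
      by (subst measurable_cong_sets[OF s refl]) simp
    then show ?thesis
      using assms(1) by (intro prob_space.prob_space_distr) (auto simp: real_distribution_def)
  qed
  have e: "\<eta> \<in> space (subprob_algebra borel)"
    using assms(1) by (auto simp: space_subprob_algebra real_distribution_def
        real_distribution_axioms_def prob_space_imp_subprob_space)
  have s: "sets Rm = sets borel" using assms(2) by (simp add: real_distribution.events_eq_borel)
  show "(\<lambda>r. distr \<eta> borel (\<lambda>z. r + \<gamma> * z)) \<in> Rm \<rightarrow>\<^sub>M subprob_algebra borel"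
    apply (rule measurable_distr2[where M=borel])
     apply (subst measurable_cong_sets[OF sets_pair_measure_cong[OF s refl] refl])
     apply measurable
    using e by simp
qed

lemma measure_inner:
  assumes "real_distribution \<eta>"
  shows "measure (distr \<eta> borel (\<lambda>z. r + \<gamma> * z)) {..t} = measure \<eta> {z. r + \<gamma> * z \<le> t}"
proof -
  have s: "sets \<eta> = sets borel" using assms by (simp add: real_distribution.events_eq_borel)
  have sp: "space \<eta> = UNIV" using s sets_eq_imp_space_eq by fastforce
  show ?thesis
    by (subst measure_distr) (use s sp in \<open>auto simp: vimage_def\<close>)
qed

lemma bind_R:
  assumes "real_distribution \<eta>" "real_distribution Rm"
  shows "real_distribution (Rm \<bind> (\<lambda>r. distr \<eta> borel (\<lambda>z. r + \<gamma> * z)))"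
    and "measure (Rm \<bind> (\<lambda>r. distr \<eta> borel (\<lambda>z. r + \<gamma> * z))) {..t}
          = (\<integral>r. measure \<eta> {z. r + \<gamma> * z \<le> t} \<partial>Rm)"
proof -
  note k = inner_kernel[OF assms, of \<gamma>]
  have Rm: "Rm \<in> space (prob_algebra borel)" using assms(2) rd_iff by blast
  then have Rm': "Rm \<in> space (prob_algebra Rm)"
    by (simp add: space_prob_algebra)
  have k': "(\<lambda>r. distr \<eta> borel (\<lambda>z. r + \<gamma> * z)) \<in> Rm \<rightarrow>\<^sub>M prob_algebra borel" by (rule k)
  show "real_distribution (Rm \<bind> (\<lambda>r. distr \<eta> borel (\<lambda>z. r + \<gamma> * z)))"
    unfolding rd_iff using prob_space_bind'[OF Rm' k'] sets_bind'[OF Rm' k']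
    by (simp add: space_prob_algebra)
  have "emeasure (Rm \<bind> (\<lambda>r. distr \<eta> borel (\<lambda>z. r + \<gamma> * z))) {..t}
      = (\<integral>\<^sup>+r. emeasure (distr \<eta> borel (\<lambda>z. r + \<gamma> * z)) {..t} \<partial>Rm)"
    by (rule emeasure_bind_prob_algebra[OF Rm' k']) simp
  also have "\<dots> = (\<integral>\<^sup>+r. ennreal (measure (distr \<eta> borel (\<lambda>z. r + \<gamma> * z)) {..t}) \<partial>Rm)"
  proof (rule nn_integral_cong)
    fix r
    interpret prob_space "distr \<eta> borel (\<lambda>z. r + \<gamma> * z)"
      by (rule inner_prob[OF assms(1)])
    show "emeasure (distr \<eta> borel (\<lambda>z. r + \<gamma> * z)) {..t} = ennreal (measure (distr \<eta> borel (\<lambda>z. r + \<gamma> * z)) {..t})"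
      by (simp add: emeasure_eq_measure)
  qed
  also have "\<dots> = ennreal (\<integral>r. measure (distr \<eta> borel (\<lambda>z. r + \<gamma> * z)) {..t} \<partial>Rm)"
  proof (rule nn_integral_eq_integral)
    interpret prob_space Rm using assms(2) by (simp add: real_distribution_def)
    have m: "(\<lambda>r. measure (distr \<eta> borel (\<lambda>z. r + \<gamma> * z)) {..t}) \<in> borel_measurable Rm"
      by (rule measurable_compose[OF k' measurable_measure_prob_algebra]) simp
    show "integrable Rm (\<lambda>r. measure (distr \<eta> borel (\<lambda>z. r + \<gamma> * z)) {..t})"
    proof (rule integrable_const_bound[where B=1])
      show "AE x in Rm. norm (measure (distr \<eta> borel (\<lambda>z. x + \<gamma> * z)) {..t}) \<le> 1"
      proof (rule AE_I2)
        fix r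
        interpret P: prob_space "distr \<eta> borel (\<lambda>z. r + \<gamma> * z)"
          by (rule inner_prob[OF assms(1)])
        show "norm (measure (distr \<eta> borel (\<lambda>z. r + \<gamma> * z)) {..t}) \<le> 1"
          by simp
      qed
    qed (rule m)
  qed simp
  finally have "emeasure (Rm \<bind> (\<lambda>r. distr \<eta> borel (\<lambda>z. r + \<gamma> * z))) {..t} =
      ennreal (\<integral>r. measure (distr \<eta> borel (\<lambda>z. r + \<gamma> * z)) {..t} \<partial>Rm)" .
  moreover have "0 \<le> (\<integral>r. measure (distr \<eta> borel (\<lambda>z. r + \<gamma> * z)) {..t} \<partial>Rm)"
    by (rule integral_nonneg_AE) simp
  ultimately have "measure (Rm \<bind> (\<lambda>r. distr \<eta> borel (\<lambda>z. r + \<gamma> * z))) {..t} =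
      (\<integral>r. measure (distr \<eta> borel (\<lambda>z. r + \<gamma> * z)) {..t} \<partial>Rm)"
    by (simp add: measure_def)
  then show "measure (Rm \<bind> (\<lambda>r. distr \<eta> borel (\<lambda>z. r + \<gamma> * z))) {..t}
          = (\<integral>r. measure \<eta> {z. r + \<gamma> * z \<le> t} \<partial>Rm)"
    by (simp add: measure_inner[OF assms(1)])
qed

lemma bind_pmf_fin:
  fixes P :: "'x::finite pmf" and f :: "'x \<Rightarrow> real measure"
  assumes "\<And>x. real_distribution (f x)"
  shows "real_distribution (measure_pmf P \<bind> f)"
    and "A \<in> sets borel \<Longrightarrow> measure (measure_pmf P \<bind> f) A = (\<Sum>x\<in>UNIV. pmf P x * measure (f x) A)"
proof -
  have P: "measure_pmf P \<in> space (prob_algebra (count_space UNIV))"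
    by (simp add: space_prob_algebra prob_space_measure_pmf)
  have f: "f \<in> count_space UNIV \<rightarrow>\<^sub>M prob_algebra borel"
    using assms rd_iff by auto
  show "real_distribution (measure_pmf P \<bind> f)"
    unfolding rd_iff using prob_space_bind'[OF P f] sets_bind'[OF P f]
    by (simp add: space_prob_algebra)
  assume A: "A \<in> sets borel"
  have "emeasure (measure_pmf P \<bind> f) A = (\<integral>\<^sup>+x. emeasure (f x) A \<partial>measure_pmf P)"
    by (rule emeasure_bind_prob_algebra[OF P f]) (use A in simp)
  also have "\<dots> = (\<Sum>x\<in>UNIV. emeasure (f x) A * pmf P x)"
    by (rule nn_integral_measure_pmf_support) auto
  also have "\<dots> = (\<Sum>x\<in>UNIV. ennreal (pmf P x * measure (f x) A))"
  proof (rule sum.cong)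
    fix x
    interpret prob_space "f x" using assms by (simp add: real_distribution_def)
    show "emeasure (f x) A * pmf P x = ennreal (pmf P x * measure (f x) A)"
      by (simp add: emeasure_eq_measure ennreal_mult mult.commute)
  qed simp
  also have "\<dots> = ennreal (\<Sum>x\<in>UNIV. pmf P x * measure (f x) A)"
    by (rule sum_ennreal) simp
  finally show "measure (measure_pmf P \<bind> f) A = (\<Sum>x\<in>UNIV. pmf P x * measure (f x) A)"
    by (simp add: measure_def sum_nonneg)
qed

lemma bell:
  fixes p :: "'s::finite \<Rightarrow> 'a::finite \<Rightarrow> 's pmf"
  assumes "\<And>x a. real_distribution (\<eta> x a)" "\<And>x a. real_distribution (R x a)"
  shows "real_distribution (dist_bellman \<gamma> p \<pi> R \<eta> x a)"
    and "cdf (dist_bellman \<gamma> p \<pi> R \<eta> x a) t = (\<Sum>x'\<in>UNIV. pmf (p x a) x' * (\<Sum>a'\<in>UNIV.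
            pmf (\<pi> x') a' * (\<integral>r. measure (\<eta> x' a') {z. r + \<gamma> * z \<le> t} \<partial>R x a)))"
proof -
  note I = bind_R[OF assms(1) assms(2)]
  have J: "real_distribution (measure_pmf (\<pi> x') \<bind> (\<lambda>a'. R x a \<bind> (\<lambda>r. distr (\<eta> x' a') borel (\<lambda>z. r + \<gamma> * z))))" for x'
    by (rule bind_pmf_fin(1)) (rule I(1))
  show "real_distribution (dist_bellman \<gamma> p \<pi> R \<eta> x a)"
    unfolding dist_bellman_def by (rule bind_pmf_fin(1)) (rule J)
  show "cdf (dist_bellman \<gamma> p \<pi> R \<eta> x a) t = (\<Sum>x'\<in>UNIV. pmf (p x a) x' * (\<Sum>a'\<in>UNIV.
            pmf (\<pi> x') a' * (\<integral>r. measure (\<eta> x' a') {z. r + \<gamma> * z \<le> t} \<partial>R x a)))"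
    unfolding dist_bellman_def cdf_def
    by (simp add: bind_pmf_fin(2)[OF J] bind_pmf_fin(2)[OF I(1)] I(2))
qed


lemma kern_pos: "0 < \<gamma> \<Longrightarrow> measure \<eta> {z. r + \<gamma> * z \<le> t} = cdf \<eta> ((t - r) / \<gamma>)"
proof -
  assume g: "0 < \<gamma>"
  have "{z. r + \<gamma> * z \<le> t} = {..(t - r) / \<gamma>}"
    using g by (auto simp: field_simps)
  then show ?thesis by (simp add: cdf_def)
qed

lemma kern_zero: "real_distribution \<eta> \<Longrightarrow> measure \<eta> {z. r + 0 * z \<le> t} = (if r \<le> t then 1 else 0)"
proof -
  assume "real_distribution \<eta>"
  then interpret real_distribution \<eta> .
  have "prob UNIV = 1" using prob_space by simp
  then show ?thesis by (cases "r \<le> t") auto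
qed

lemma rd_UNIV: "real_distribution \<eta> \<Longrightarrow> measure \<eta> UNIV = 1"
  using kern_zero[of \<eta> 0 0] by simp

lemma kern_meas:
  assumes "real_distribution \<eta>" "0 \<le> \<gamma>" "sets Rm = sets borel"
  shows "(\<lambda>r. measure \<eta> {z. r + \<gamma> * z \<le> t}) \<in> borel_measurable Rm"
proof -
  note [measurable] = cdf_meas[OF assms(1)]
  have "(\<lambda>r. measure \<eta> {z. r + \<gamma> * z \<le> t}) \<in> borel_measurable borel"
  proof (cases "\<gamma> = 0")
    case True
    then show ?thesis by (simp add: kern_zero[OF assms(1)])
  next
    case False
    then have "0 < \<gamma>" using assms by simp
    then show ?thesis by (simp add: kern_pos)
  qed
  then show ?thesis by (simp add: measurable_cong_sets[OF assms(3) refl])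
qed

lemma kern_bounds: "real_distribution \<eta> \<Longrightarrow> 0 \<le> measure \<eta> A \<and> measure \<eta> A \<le> 1"
  by (simp add: prob_space.prob_le_1 real_distribution_def)

lemma kern_int:
  assumes "real_distribution \<eta>" "0 \<le> \<gamma>" "real_distribution Rm"
  shows "integrable Rm (\<lambda>r. measure \<eta> {z. r + \<gamma> * z \<le> t})"
proof -
  interpret real_distribution Rm by (rule assms(3))
  show ?thesis
    by (rule integrable_const_bound[where B=1])
       (use kern_bounds[OF assms(1)] kern_meas[OF assms(1,2)] in auto)
qed

lemma bell_levy:
  fixes p :: "'s::finite \<Rightarrow> 'a::finite \<Rightarrow> 's pmf"
  assumes "\<And>x a. real_distribution (\<eta> x a)" "\<And>x a. real_distribution (\<eta>' x a)"
    "\<And>x a. real_distribution (R x a)" "0 \<le> \<gamma>"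
    "\<And>x a s. cdf (\<eta> x a) s \<le> cdf (\<eta>' x a) (s + \<epsilon>)"
  shows "cdf (dist_bellman \<gamma> p \<pi> R \<eta> x a) t \<le> cdf (dist_bellman \<gamma> p \<pi> R \<eta>' x a) (t + \<gamma> * \<epsilon>)"
  unfolding bell(2)[OF assms(1,3)] bell(2)[OF assms(2,3)]
proof (intro sum_mono mult_left_mono integral_mono)
  fix x' a' r
  show "measure (\<eta> x' a') {z. r + \<gamma> * z \<le> t} \<le> measure (\<eta>' x' a') {z. r + \<gamma> * z \<le> t + \<gamma> * \<epsilon>}"
  proof (cases "\<gamma> = 0")
    case True
    then show ?thesis using kern_zero[OF assms(1)] kern_zero[OF assms(2)] by simp
  next
    case False
    then have g: "0 < \<gamma>" using assms by simp
    have "(t + \<gamma> * \<epsilon> - r) / \<gamma> = (t - r) / \<gamma> + \<epsilon>" using g by (simp add: field_simps)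
    then show ?thesis using g assms(5) by (simp add: kern_pos)
  qed
qed (auto intro: kern_int assms)

lemma sum_pmf_UNIV: "(\<Sum>x\<in>(UNIV::'x::finite set). pmf P x) = 1"
  by (rule sum_pmf_eq_1) auto

lemma bell_bnd:
  fixes p :: "'s::finite \<Rightarrow> 'a::finite \<Rightarrow> 's pmf"
  assumes "\<And>x a. bnd B (\<eta> x a)" "\<And>x a. real_distribution (R x a)"
    "\<And>x a. AE r in R x a. r \<in> {-Rmax..Rmax}" "0 \<le> \<gamma>"
  shows "bnd (Rmax + \<gamma> * B) (dist_bellman \<gamma> p \<pi> R \<eta> x a)"
proof -
  have rd: "\<And>x a. real_distribution (\<eta> x a)" using assms(1) by (simp add: bnd_def)
  have lo: "cdf (dist_bellman \<gamma> p \<pi> R \<eta> x a) t = 0" if t: "t < - (Rmax + \<gamma> * B)" for t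
  proof -
    have "(\<integral>r. measure (\<eta> x' a') {z. r + \<gamma> * z \<le> t} \<partial>R x a) = 0" for x' a'
    proof (rule integral_eq_zero_AE)
      show "AE r in R x a. measure (\<eta> x' a') {z. r + \<gamma> * z \<le> t} = 0"
        using assms(3)[of x a]
      proof eventually_elim
        case (elim r)
        show ?case
        proof (cases "\<gamma> = 0")
          case True
          then show ?thesis using kern_zero[OF rd] elim t by auto
        next
          case False
          then have g: "0 < \<gamma>" using assms by simp
          have "(t - r) / \<gamma> < - B"
            using g elim t by (simp add: field_simps)
          then show ?thesis using g assms(1) by (simp add: kern_pos bnd_def)
        qed
      qed
    qed
    then show ?thesis unfolding bell(2)[OF rd assms(2)] by simp
  qed
  have hi: "cdf (dist_bellman \<gamma> p \<pi> R \<eta> x a) t = 1" if t: "Rmax + \<gamma> * B \<le> t" for t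
  proof -
    have "(\<integral>r. measure (\<eta> x' a') {z. r + \<gamma> * z \<le> t} \<partial>R x a) = 1" for x' a'
    proof -
      interpret real_distribution "R x a" by (rule assms(2))
      have "(\<integral>r. measure (\<eta> x' a') {z. r + \<gamma> * z \<le> t} \<partial>R x a) = (\<integral>r. 1 \<partial>R x a)"
      proof (rule integral_cong_AE)
        show "AE r in R x a. measure (\<eta> x' a') {z. r + \<gamma> * z \<le> t} = 1"
          using assms(3)[of x a]
        proof eventually_elim
          case (elim r)
          show ?case
          proof (cases "\<gamma> = 0")
            case True
            then show ?thesis using rd_UNIV[OF rd] elim t by auto
          next
            case False
            then have g: "0 < \<gamma>" using assms by simp
            have "B \<le> (t - r) / \<gamma>"
              using g elim t by (simp add: field_simps)
            then show ?thesis using g assms(1) by (simp add: kern_pos bnd_def)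
          qed
        qed
      qed (auto intro: kern_meas rd assms(4))
      then show ?thesis using rd_UNIV[OF assms(2)] by simp
    qed
    then show ?thesis unfolding bell(2)[OF rd assms(2)] by (simp add: sum_pmf_UNIV)
  qed
  show ?thesis unfolding bnd_def using lo hi bell(1)[OF rd assms(2)] by auto
qed


lemma ennreal_sum_mult:
  fixes c d :: "'i::finite \<Rightarrow> real"
  assumes "\<And>i. 0 \<le> c i" "\<And>i. 0 \<le> d i"
  shows "ennreal (\<Sum>i\<in>UNIV. c i * d i) = (\<Sum>i\<in>UNIV. ennreal (c i) * ennreal (d i))"
proof -
  have "ennreal (\<Sum>i\<in>UNIV. c i * d i) = (\<Sum>i\<in>UNIV. ennreal (c i * d i))"
    by (rule sum_ennreal[symmetric]) (simp add: assms)
  also have "\<dots> = (\<Sum>i\<in>UNIV. ennreal (c i) * ennreal (d i))"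
    using assms by (simp add: ennreal_mult)
  finally show ?thesis .
qed

lemma bell_contr:
  fixes p :: "'s::finite \<Rightarrow> 'a::finite \<Rightarrow> 's pmf"
  assumes rd1: "\<And>x a. real_distribution (\<eta> x a)" and rd2: "\<And>x a. real_distribution (\<eta>' x a)"
    and rdR: "\<And>x a. real_distribution (R x a)" and g0: "0 \<le> \<gamma>"
    and De: "\<And>x a. Dw (\<eta> x a) (\<eta>' x a) \<le> e"
  shows "Dw (dist_bellman \<gamma> p \<pi> R \<eta> x a) (dist_bellman \<gamma> p \<pi> R \<eta>' x a) \<le> ennreal \<gamma> * e"
proof (cases "\<gamma> = 0")
  case True
  have "cdf (dist_bellman \<gamma> p \<pi> R \<eta> x a) t = cdf (dist_bellman \<gamma> p \<pi> R \<eta>' x a) t" for t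
  proof -
    have eq: "measure (\<eta> x' a') {z. r + \<gamma> * z \<le> t} = measure (\<eta>' x' a') {z. r + \<gamma> * z \<le> t}" for x' a' r
      unfolding True by (subst kern_zero[OF rd1], subst kern_zero[OF rd2], rule refl)
    show ?thesis unfolding bell(2)[OF rd1 rdR] bell(2)[OF rd2 rdR] eq ..
  qed
  then show ?thesis by (simp add: Dw_def)
next
  case False
  then have g: "0 < \<gamma>" using g0 by simp
  define h where "h x' a' r t = ennreal \<bar>cdf (\<eta> x' a') ((t - r) / \<gamma>) - cdf (\<eta>' x' a') ((t - r) / \<gamma>)\<bar>" for x' a' r t
  interpret Rr: real_distribution "R x a" by (rule rdR)
  have sR: "sets (R x a) = sets borel" by simp
  interpret PS: pair_sigma_finite "R x a" lborel
    by (rule pair_sigma_finite.intro) (auto intro: Rr.sigma_finite_measure_axioms lborel.sigma_finite_measure_axioms)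
  have hm: "(\<lambda>(r, t). h x' a' r t) \<in> borel_measurable (R x a \<Otimes>\<^sub>M lborel)" for x' a'
  proof -
    note [measurable] = cdf_meas[OF rd1[of x' a']] cdf_meas[OF rd2[of x' a']]
    show ?thesis
      unfolding h_def
      by (subst measurable_cong_sets[OF sets_pair_measure_cong[OF sR sets_lborel] refl]) measurable
  qed
  have hm2: "(\<lambda>t. \<integral>\<^sup>+r. h x' a' r t \<partial>R x a) \<in> borel_measurable lborel" for x' a'
  proof -
    have "(\<lambda>(t, r). h x' a' r t) \<in> borel_measurable (lborel \<Otimes>\<^sub>M R x a)"
      using measurable_pair_swap[OF hm[of x' a']] by simp
    then show ?thesis
      using Rr.borel_measurable_nn_integral_fst[of "\<lambda>(t, r). h x' a' r t" lborel] by simp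
  qed
  have int_abs: "integrable (R x a) (\<lambda>r. measure (\<eta>'' x' a') {z. r + \<gamma> * z \<le> t})"
    if "\<And>x a. real_distribution (\<eta>'' x a)" for \<eta>'' x' a' t
    using kern_int[OF that g0 rdR] .
  have pt: "ennreal \<bar>cdf (dist_bellman \<gamma> p \<pi> R \<eta> x a) t - cdf (dist_bellman \<gamma> p \<pi> R \<eta>' x a) t\<bar>
     \<le> (\<Sum>x'\<in>UNIV. ennreal (pmf (p x a) x') * (\<Sum>a'\<in>UNIV. ennreal (pmf (\<pi> x') a') * (\<integral>\<^sup>+r. h x' a' r t \<partial>R x a)))" for t
  proof -
    let ?f = "\<lambda>x' a' r. measure (\<eta> x' a') {z. r + \<gamma> * z \<le> t}"
    let ?g = "\<lambda>x' a' r. measure (\<eta>' x' a') {z. r + \<gamma> * z \<le> t}"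
    have "\<bar>cdf (dist_bellman \<gamma> p \<pi> R \<eta> x a) t - cdf (dist_bellman \<gamma> p \<pi> R \<eta>' x a) t\<bar>
        = \<bar>\<Sum>x'\<in>UNIV. pmf (p x a) x' * (\<Sum>a'\<in>UNIV. pmf (\<pi> x') a' * ((\<integral>r. ?f x' a' r \<partial>R x a) - (\<integral>r. ?g x' a' r \<partial>R x a)))\<bar>"
      unfolding bell(2)[OF rd1 rdR] bell(2)[OF rd2 rdR]
      by (simp only: right_diff_distrib sum_subtractf)
    also have "\<dots> \<le> (\<Sum>x'\<in>UNIV. pmf (p x a) x' * (\<Sum>a'\<in>UNIV. pmf (\<pi> x') a' * (\<integral>r. \<bar>?f x' a' r - ?g x' a' r\<bar> \<partial>R x a)))"
    proof -
      have "\<bar>(\<integral>r. ?f x' a' r \<partial>R x a) - (\<integral>r. ?g x' a' r \<partial>R x a)\<bar> \<le> (\<integral>r. \<bar>?f x' a' r - ?g x' a' r\<bar> \<partial>R x a)" for x' a'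
      proof -
        have "(\<integral>r. ?f x' a' r \<partial>R x a) - (\<integral>r. ?g x' a' r \<partial>R x a) = (\<integral>r. ?f x' a' r - ?g x' a' r \<partial>R x a)"
          by (subst Bochner_Integration.integral_diff) (auto intro: int_abs rd1 rd2)
        then show ?thesis using integral_abs_bound[of "R x a" "\<lambda>r. ?f x' a' r - ?g x' a' r"] by simp
      qed
      then have inner: "\<bar>\<Sum>a'\<in>UNIV. pmf (\<pi> x') a' * ((\<integral>r. ?f x' a' r \<partial>R x a) - (\<integral>r. ?g x' a' r \<partial>R x a))\<bar>
          \<le> (\<Sum>a'\<in>UNIV. pmf (\<pi> x') a' * (\<integral>r. \<bar>?f x' a' r - ?g x' a' r\<bar> \<partial>R x a))" for x'
      proof -
        assume H: "\<And>x' a'. \<bar>(\<integral>r. ?f x' a' r \<partial>R x a) - (\<integral>r. ?g x' a' r \<partial>R x a)\<bar> \<le> (\<integral>r. \<bar>?f x' a' r - ?g x' a' r\<bar> \<partial>R x a)"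
        have "\<bar>\<Sum>a'\<in>UNIV. pmf (\<pi> x') a' * ((\<integral>r. ?f x' a' r \<partial>R x a) - (\<integral>r. ?g x' a' r \<partial>R x a))\<bar>
          \<le> (\<Sum>a'\<in>UNIV. \<bar>pmf (\<pi> x') a' * ((\<integral>r. ?f x' a' r \<partial>R x a) - (\<integral>r. ?g x' a' r \<partial>R x a))\<bar>)"
          by (rule sum_abs)
        also have "\<dots> \<le> (\<Sum>a'\<in>UNIV. pmf (\<pi> x') a' * (\<integral>r. \<bar>?f x' a' r - ?g x' a' r\<bar> \<partial>R x a))"
          unfolding abs_mult by (rule sum_mono) (simp add: mult_left_mono H)
        finally show ?thesis .
      qed
      have "\<bar>\<Sum>x'\<in>UNIV. pmf (p x a) x' * (\<Sum>a'\<in>UNIV. pmf (\<pi> x') a' * ((\<integral>r. ?f x' a' r \<partial>R x a) - (\<integral>r. ?g x' a' r \<partial>R x a)))\<bar>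
        \<le> (\<Sum>x'\<in>UNIV. \<bar>pmf (p x a) x' * (\<Sum>a'\<in>UNIV. pmf (\<pi> x') a' * ((\<integral>r. ?f x' a' r \<partial>R x a) - (\<integral>r. ?g x' a' r \<partial>R x a)))\<bar>)"
        by (rule sum_abs)
      also have "\<dots> \<le> (\<Sum>x'\<in>UNIV. pmf (p x a) x' * (\<Sum>a'\<in>UNIV. pmf (\<pi> x') a' * (\<integral>r. \<bar>?f x' a' r - ?g x' a' r\<bar> \<partial>R x a)))"
        unfolding abs_mult by (rule sum_mono) (simp add: mult_left_mono inner)
      finally show ?thesis .
    qed
    finally have le: "\<bar>cdf (dist_bellman \<gamma> p \<pi> R \<eta> x a) t - cdf (dist_bellman \<gamma> p \<pi> R \<eta>' x a) t\<bar>
      \<le> (\<Sum>x'\<in>UNIV. pmf (p x a) x' * (\<Sum>a'\<in>UNIV. pmf (\<pi> x') a' * (\<integral>r. \<bar>?f x' a' r - ?g x' a' r\<bar> \<partial>R x a)))" .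
    have I1: "(\<integral>\<^sup>+r. h x' a' r t \<partial>R x a) = ennreal (\<integral>r. \<bar>?f x' a' r - ?g x' a' r\<bar> \<partial>R x a)" for x' a'
    proof -
      have "(\<integral>\<^sup>+r. h x' a' r t \<partial>R x a) = (\<integral>\<^sup>+r. ennreal \<bar>?f x' a' r - ?g x' a' r\<bar> \<partial>R x a)"
        unfolding h_def using g by (simp add: kern_pos)
      also have "\<dots> = ennreal (\<integral>r. \<bar>?f x' a' r - ?g x' a' r\<bar> \<partial>R x a)"
        by (rule nn_integral_eq_integral)
          (auto intro!: integrable_abs Bochner_Integration.integrable_diff int_abs[OF rd1] int_abs[OF rd2])
      finally show ?thesis .
    qed
    have nn: "0 \<le> (\<integral>r. \<bar>?f x' a' r - ?g x' a' r\<bar> \<partial>R x a)" for x' a'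
      by (rule integral_nonneg_AE) simp
    have "ennreal (\<Sum>x'\<in>UNIV. pmf (p x a) x' * (\<Sum>a'\<in>UNIV. pmf (\<pi> x') a' * (\<integral>r. \<bar>?f x' a' r - ?g x' a' r\<bar> \<partial>R x a)))
       = (\<Sum>x'\<in>UNIV. ennreal (pmf (p x a) x') * ennreal (\<Sum>a'\<in>UNIV. pmf (\<pi> x') a' * (\<integral>r. \<bar>?f x' a' r - ?g x' a' r\<bar> \<partial>R x a)))"
      by (rule ennreal_sum_mult) (auto intro!: sum_nonneg mult_nonneg_nonneg nn)
    also have "\<dots> = (\<Sum>x'\<in>UNIV. ennreal (pmf (p x a) x') * (\<Sum>a'\<in>UNIV. ennreal (pmf (\<pi> x') a') * (\<integral>\<^sup>+r. h x' a' r t \<partial>R x a)))"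
      unfolding I1 by (subst ennreal_sum_mult) (auto intro!: nn)
    finally have E: "ennreal (\<Sum>x'\<in>UNIV. pmf (p x a) x' * (\<Sum>a'\<in>UNIV. pmf (\<pi> x') a' * (\<integral>r. \<bar>?f x' a' r - ?g x' a' r\<bar> \<partial>R x a)))
       = (\<Sum>x'\<in>UNIV. ennreal (pmf (p x a) x') * (\<Sum>a'\<in>UNIV. ennreal (pmf (\<pi> x') a') * (\<integral>\<^sup>+r. h x' a' r t \<partial>R x a)))" .
    show ?thesis by (rule order_trans[OF ennreal_leI[OF le] eq_refl[OF E]])
  qed
  have F: "(\<integral>\<^sup>+t. (\<integral>\<^sup>+r. h x' a' r t \<partial>R x a) \<partial>lborel) = ennreal \<gamma> * Dw (\<eta> x' a') (\<eta>' x' a')" for x' a'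
  proof -
    have "(\<integral>\<^sup>+t. (\<integral>\<^sup>+r. h x' a' r t \<partial>R x a) \<partial>lborel) = (\<integral>\<^sup>+r. (\<integral>\<^sup>+t. h x' a' r t \<partial>lborel) \<partial>R x a)"
      by (rule PS.Fubini') (use hm[of x' a'] in simp)
    also have "\<dots> = (\<integral>\<^sup>+r. ennreal \<gamma> * Dw (\<eta> x' a') (\<eta>' x' a') \<partial>R x a)"
    proof (rule nn_integral_cong)
      fix r
      note [measurable] = cdf_meas[OF rd1[of x' a']] cdf_meas[OF rd2[of x' a']]
      have "(\<integral>\<^sup>+t. h x' a' r t \<partial>lborel) = ennreal \<bar>\<gamma>\<bar> * (\<integral>\<^sup>+t. h x' a' r (r + \<gamma> * t) \<partial>lborel)"
        by (rule nn_integral_real_affine) (use g in \<open>auto simp: h_def\<close>)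
      also have "(\<lambda>t. h x' a' r (r + \<gamma> * t)) = (\<lambda>t. ennreal \<bar>cdf (\<eta> x' a') t - cdf (\<eta>' x' a') t\<bar>)"
        using g by (auto simp: h_def)
      finally show "(\<integral>\<^sup>+t. h x' a' r t \<partial>lborel) = ennreal \<gamma> * Dw (\<eta> x' a') (\<eta>' x' a')"
        using g by (simp add: Dw_def)
    qed
    also have "\<dots> = ennreal \<gamma> * Dw (\<eta> x' a') (\<eta>' x' a')"
      using Rr.emeasure_space_1 by simp
    finally show ?thesis .
  qed
  have "Dw (dist_bellman \<gamma> p \<pi> R \<eta> x a) (dist_bellman \<gamma> p \<pi> R \<eta>' x a)
      \<le> (\<integral>\<^sup>+t. (\<Sum>x'\<in>UNIV. ennreal (pmf (p x a) x') * (\<Sum>a'\<in>UNIV. ennreal (pmf (\<pi> x') a') * (\<integral>\<^sup>+r. h x' a' r t \<partial>R x a))) \<partial>lborel)"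
    unfolding Dw_def by (rule nn_integral_mono) (rule pt)
  also have "\<dots> = (\<Sum>x'\<in>UNIV. ennreal (pmf (p x a) x') * (\<Sum>a'\<in>UNIV. ennreal (pmf (\<pi> x') a') *
        (\<integral>\<^sup>+t. (\<integral>\<^sup>+r. h x' a' r t \<partial>R x a) \<partial>lborel)))"
    using hm2 by (simp add: nn_integral_sum nn_integral_cmult)
  also have "\<dots> = (\<Sum>x'\<in>UNIV. ennreal (pmf (p x a) x') * (\<Sum>a'\<in>UNIV. ennreal (pmf (\<pi> x') a') *
        (ennreal \<gamma> * Dw (\<eta> x' a') (\<eta>' x' a'))))"
    by (simp only: F)
  also have "(\<Sum>x'\<in>UNIV. ennreal (pmf (p x a) x') * (\<Sum>a'\<in>UNIV. ennreal (pmf (\<pi> x') a') *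
        (ennreal \<gamma> * Dw (\<eta> x' a') (\<eta>' x' a'))))
      \<le> (\<Sum>x'\<in>UNIV. ennreal (pmf (p x a) x') * (\<Sum>a'\<in>UNIV. ennreal (pmf (\<pi> x') a') * (ennreal \<gamma> * e)))"
    by (intro sum_mono mult_left_mono De) auto
  also have "\<dots> = ennreal \<gamma> * e"
  proof -
    have s1: "(\<Sum>a'\<in>UNIV. ennreal (pmf (\<pi> x') a')) = 1" for x'
      using sum_pmf_UNIV[of "\<pi> x'"] sum_ennreal[of UNIV "pmf (\<pi> x')"] by simp
    have s2: "(\<Sum>x'\<in>UNIV. ennreal (pmf (p x a) x')) = 1"
      using sum_pmf_UNIV[of "p x a"] sum_ennreal[of UNIV "pmf (p x a)"] by simp
    show ?thesis by (simp add: sum_distrib_right[symmetric] s1 s2)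
  qed
  finally show ?thesis .
qed




lemma tau_bounds: "K \<ge> 1 \<Longrightarrow> k \<in> {1..K} \<Longrightarrow> 0 < tau K k \<and> tau K k < 1"
  by (auto simp: tau_def field_simps)

lemma tau_mono: "k \<le> j \<Longrightarrow> tau K k \<le> tau K j"
  by (auto simp: tau_def divide_right_mono)

lemma cdf_proj:
  assumes "real_distribution \<mu>" "K \<ge> 1"
  shows "cdf (proj_W1 K \<mu>) t = card {k\<in>{1..K}. tau K k \<le> cdf \<mu> t} / K"
proof -
  have "{k\<in>{1..K}. quantile \<mu> (tau K k) \<le> t} = {k\<in>{1..K}. tau K k \<le> cdf \<mu> t}"
    using quantile_galois[OF assms(1)] tau_bounds[OF assms(2)] by auto
  then show ?thesis unfolding proj_W1_def cdf_unif[OF assms(2)] by simp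
qed

lemma count_tau:
  assumes "K \<ge> 1" "0 \<le> f" "f \<le> 1"
  shows "\<bar>card {k\<in>{1..K}. tau K k \<le> f} / K - f\<bar> \<le> 1 / (2 * K)"
proof -
  define y where "y = real K * f + 1/2"
  define n where "n = nat \<lfloor>y\<rfloor>"
  have Kp: "(0::real) < K" using assms by simp
  have y0: "0 \<le> \<lfloor>y\<rfloor>" using assms unfolding y_def by simp
  have tk: "tau K k \<le> f \<longleftrightarrow> real k \<le> y" for k
  proof -
    have "tau K k \<le> f \<longleftrightarrow> (2 * real k - 1) \<le> f * (2 * real K)"
      unfolding tau_def using Kp by (simp add: divide_le_eq)
    then show ?thesis unfolding y_def by (simp add: algebra_simps) linarith
  qed
  have kn: "real k \<le> y \<longleftrightarrow> k \<le> n" for k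
  proof -
    have "real k \<le> y \<longleftrightarrow> int k \<le> \<lfloor>y\<rfloor>"
      by (simp add: le_floor_iff)
    also have "\<dots> \<longleftrightarrow> k \<le> n"
      unfolding n_def using y0 by (simp add: le_nat_iff)
    finally show ?thesis .
  qed
  have yK: "y < real K + 1"
  proof -
    have "real K * f \<le> real K" using assms Kp by (simp add: mult_left_le)
    then show ?thesis unfolding y_def by simp
  qed
  have nK: "n \<le> K"
  proof -
    have "\<lfloor>y\<rfloor> < int K + 1" using yK by linarith
    then show ?thesis unfolding n_def by simp
  qed
  have "{k\<in>{1..K}. tau K k \<le> f} = {1..n}"
    using tk kn nK by auto
  then have c: "card {k\<in>{1..K}. tau K k \<le> f} = n" by simp
  have n1: "real n \<le> y" using kn by simp
  have n2: "y < real n + 1"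
  proof -
    have "real n = of_int \<lfloor>y\<rfloor>" unfolding n_def using y0 by simp
    then show ?thesis by linarith
  qed
  have "\<bar>real n - K * f\<bar> \<le> 1/2" using n1 n2 unfolding y_def by linarith
  then have "\<bar>real n - K * f\<bar> / K \<le> (1/2) / K" using Kp by (intro divide_right_mono) auto
  moreover have "\<bar>real n - K * f\<bar> / K = \<bar>real n / K - f\<bar>"
  proof -
    have "real n / K - f = (real n - K * f) / K" using Kp by (simp add: field_simps)
    then show ?thesis using Kp by (simp add: abs_divide)
  qed
  ultimately show ?thesis using c by simp
qed

lemma count_tau0: "K \<ge> 1 \<Longrightarrow> card {k\<in>{1..K}. tau K k \<le> 0} = 0"
proof -
  assume K: "K \<ge> 1"
  have "{k\<in>{1..K}. tau K k \<le> 0} = {}" using tau_bounds[OF K] by fastforce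
  then show ?thesis by simp
qed

lemma count_tau1: "K \<ge> 1 \<Longrightarrow> card {k\<in>{1..K}. tau K k \<le> 1} = K"
proof -
  assume "K \<ge> 1"
  then have "{k\<in>{1..K}. tau K k \<le> 1} = {1..K}" using tau_bounds[of K] by (auto intro: less_imp_le)
  then show ?thesis by simp
qed

lemma proj_close:
  assumes "bnd B \<mu>" "K \<ge> 1" "0 \<le> B"
  shows "Dw (proj_W1 K \<mu>) \<mu> \<le> ennreal (B / K)"
proof -
  have rd: "real_distribution \<mu>" using assms(1) by (simp add: bnd_def)
  have "\<bar>cdf (proj_W1 K \<mu>) t - cdf \<mu> t\<bar> \<le> (if -B \<le> t \<and> t < B then 1 / (2 * K) else 0)" for t
  proof (cases "-B \<le> t \<and> t < B")
    case True
    then show ?thesis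
      unfolding cdf_proj[OF rd assms(2)] using count_tau[OF assms(2) cdf_nonneg'[OF rd] cdf_le1[OF rd]] by simp
  next
    case False
    then have "t < -B \<or> B \<le> t" by auto
    then show ?thesis
      unfolding cdf_proj[OF rd assms(2)] using assms(1,2) count_tau0[OF assms(2)] count_tau1[OF assms(2)]
      by (auto simp: bnd_def)
  qed
  then have "Dw (proj_W1 K \<mu>) \<mu> \<le> ennreal (2 * B * (1 / (2 * K)))"
    by (rule Dw_le_box) (use assms in auto)
  then show ?thesis by simp
qed


lemma card_sum_if: "finite A \<Longrightarrow> real (card {x\<in>A. P x}) = (\<Sum>x\<in>A. if P x then 1 else 0)"
  by (simp add: sum.inter_filter[symmetric])

lemma ind_diff: "\<bar>(if (a::real) \<le> t then 1 else 0) - (if s \<le> t then 1 else 0 :: real)\<bar> = indicator {min a s..<max a s} t"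
  by (auto simp: indicator_def min_def max_def)

lemma Dw_sorted:
  assumes K: "K \<ge> 1"
    and ma: "\<And>i j. 1 \<le> i \<Longrightarrow> i \<le> j \<Longrightarrow> j \<le> K \<Longrightarrow> a i \<le> a j"
    and ms: "\<And>i j. 1 \<le> i \<Longrightarrow> i \<le> j \<Longrightarrow> j \<le> K \<Longrightarrow> s i \<le> s j"
  shows "Dw (unif_dirac K a) (unif_dirac K s) = ennreal ((1 / K) * (\<Sum>k=1..K. \<bar>a k - s k\<bar>))"
proof -
  define ia where "ia t k = (if a k \<le> t then 1 else 0 :: real)" for t k
  define is' where "is' t k = (if s k \<le> t then 1 else 0 :: real)" for t k
  have pt: "\<bar>cdf (unif_dirac K a) t - cdf (unif_dirac K s) t\<bar> = (1 / K) * (\<Sum>k=1..K. \<bar>ia t k - is' t k\<bar>)" for t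
  proof -
    have ca: "real (card {k\<in>{1..K}. a k \<le> t}) = (\<Sum>k=1..K. ia t k)"
      unfolding ia_def by (rule card_sum_if) simp
    have cs: "real (card {k\<in>{1..K}. s k \<le> t}) = (\<Sum>k=1..K. is' t k)"
      unfolding is'_def by (rule card_sum_if) simp
    have cmp: "(\<forall>k\<in>{1..K}. ia t k \<le> is' t k) \<or> (\<forall>k\<in>{1..K}. is' t k \<le> ia t k)"
    proof (rule ccontr)
      assume "\<not> ?thesis"
      then obtain k j where k: "k \<in> {1..K}" "a k \<le> t" "\<not> s k \<le> t"
        and j: "j \<in> {1..K}" "s j \<le> t" "\<not> a j \<le> t"
        unfolding ia_def is'_def by (auto split: if_splits)
      show False
      proof (cases "j \<le> k")
        case True
        then show False using ma[of j k] k j by auto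
      next
        case False
        then show False using ms[of k j] k j by auto
      qed
    qed
    have "\<bar>(\<Sum>k=1..K. ia t k) - (\<Sum>k=1..K. is' t k)\<bar> = (\<Sum>k=1..K. \<bar>ia t k - is' t k\<bar>)"
      using cmp
    proof
      assume H: "\<forall>k\<in>{1..K}. ia t k \<le> is' t k"
      have "\<bar>(\<Sum>k=1..K. ia t k) - (\<Sum>k=1..K. is' t k)\<bar> = (\<Sum>k=1..K. is' t k - ia t k)"
        using sum_mono[of "{1..K}" "ia t" "is' t"] H by (simp add: sum_subtractf)
      also have "\<dots> = (\<Sum>k=1..K. \<bar>ia t k - is' t k\<bar>)"
        by (rule sum.cong) (use H in auto)
      finally show ?thesis .
    next
      assume H: "\<forall>k\<in>{1..K}. is' t k \<le> ia t k"
      have "\<bar>(\<Sum>k=1..K. ia t k) - (\<Sum>k=1..K. is' t k)\<bar> = (\<Sum>k=1..K. ia t k - is' t k)"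
        using sum_mono[of "{1..K}" "is' t" "ia t"] H by (simp add: sum_subtractf)
      also have "\<dots> = (\<Sum>k=1..K. \<bar>ia t k - is' t k\<bar>)"
        by (rule sum.cong) (use H in auto)
      finally show ?thesis .
    qed
    moreover have "cdf (unif_dirac K a) t - cdf (unif_dirac K s) t
        = ((\<Sum>k=1..K. ia t k) - (\<Sum>k=1..K. is' t k)) / K"
      unfolding cdf_unif[OF K] ca[symmetric] cs[symmetric] by (simp add: diff_divide_distrib)
    ultimately show ?thesis using K by (simp add: abs_divide)
  qed
  have "Dw (unif_dirac K a) (unif_dirac K s)
      = (\<integral>\<^sup>+t. (\<Sum>k\<in>{1..K}. ennreal (1 / K) * indicator {min (a k) (s k)..<max (a k) (s k)} t) \<partial>lborel)"
  proof -
    have "ennreal \<bar>cdf (unif_dirac K a) t - cdf (unif_dirac K s) t\<bar>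
        = (\<Sum>k\<in>{1..K}. ennreal (1 / K) * indicator {min (a k) (s k)..<max (a k) (s k)} t)" for t
    proof -
      have "ennreal \<bar>cdf (unif_dirac K a) t - cdf (unif_dirac K s) t\<bar>
          = ennreal (\<Sum>k\<in>{1..K}. (1 / K) * indicator {min (a k) (s k)..<max (a k) (s k)} t)"
        unfolding pt ia_def is'_def ind_diff by (simp add: sum_distrib_left)
      also have "\<dots> = (\<Sum>k\<in>{1..K}. ennreal ((1 / K) * indicator {min (a k) (s k)..<max (a k) (s k)} t))"
        by (rule sum_ennreal[symmetric]) simp
      also have "\<dots> = (\<Sum>k\<in>{1..K}. ennreal (1 / K) * indicator {min (a k) (s k)..<max (a k) (s k)} t)"
        by (rule sum.cong) (auto simp: indicator_def)
      finally show ?thesis .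
    qed
    then show ?thesis unfolding Dw_def by simp
  qed
  also have "\<dots> = (\<Sum>k\<in>{1..K}. ennreal (1 / K) * emeasure lborel {min (a k) (s k)..<max (a k) (s k)})"
    by (subst nn_integral_sum) (auto simp: nn_integral_cmult_indicator)
  also have "\<dots> = (\<Sum>k\<in>{1..K}. ennreal ((1 / K) * \<bar>a k - s k\<bar>))"
  proof (rule sum.cong)
    fix k
    have "max (a k) (s k) - min (a k) (s k) = \<bar>a k - s k\<bar>" by auto
    then show "ennreal (1 / K) * emeasure lborel {min (a k) (s k)..<max (a k) (s k)} = ennreal ((1 / K) * \<bar>a k - s k\<bar>)"
      by (simp add: ennreal_mult[symmetric])
  qed simp
  also have "\<dots> = ennreal ((1 / K) * (\<Sum>k=1..K. \<bar>a k - s k\<bar>))"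
    by (subst sum_ennreal) (auto simp: sum_distrib_left)
  finally show ?thesis .
qed


definition Lev :: "real \<Rightarrow> real measure \<Rightarrow> real measure \<Rightarrow> bool" where
  "Lev \<epsilon> \<mu> \<nu> \<longleftrightarrow> (\<forall>s. cdf \<mu> s \<le> cdf \<nu> (s + \<epsilon>) \<and> cdf \<nu> s \<le> cdf \<mu> (s + \<epsilon>))"

lemma Dw_sym: "Dw \<mu> \<nu> = Dw \<nu> \<mu>"
  unfolding Dw_def by (simp add: abs_minus_commute)

lemma Lev_Dw:
  assumes rm: "real_distribution \<mu>" and rn: "real_distribution \<nu>" and e: "0 \<le> \<epsilon>" and L: "Lev \<epsilon> \<mu> \<nu>"
  shows "Dw \<mu> \<nu> \<le> ennreal (2 * \<epsilon>)"
proof (cases "\<epsilon> = 0")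
  case True
  have "cdf \<mu> t = cdf \<nu> t" for t using L True unfolding Lev_def by (auto intro: antisym)
  then show ?thesis by (simp add: Dw_def)
next
  case False
  then have ep: "0 < \<epsilon>" using e by simp
  interpret N: real_distribution \<nu> by (rule rn)
  have pt: "ennreal \<bar>cdf \<mu> t - cdf \<nu> t\<bar> \<le> (\<integral>\<^sup>+x. indicator {t - \<epsilon><..t + \<epsilon>} x \<partial>\<nu>)" for t
  proof -
    have a1: "cdf \<mu> t \<le> cdf \<nu> (t + \<epsilon>)" using L unfolding Lev_def by auto
    have a2: "cdf \<nu> (t - \<epsilon>) \<le> cdf \<mu> t" using L unfolding Lev_def by (metis diff_add_cancel)
    have a3: "cdf \<nu> (t - \<epsilon>) \<le> cdf \<nu> t" "cdf \<nu> t \<le> cdf \<nu> (t + \<epsilon>)"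
      using ep by (auto intro!: cdf_mono rn)
    have "\<bar>cdf \<mu> t - cdf \<nu> t\<bar> \<le> cdf \<nu> (t + \<epsilon>) - cdf \<nu> (t - \<epsilon>)"
      using a1 a2 a3 by linarith
    also have "\<dots> = measure \<nu> {t - \<epsilon><..t + \<epsilon>}"
      using ep by (intro N.cdf_diff_eq) auto
    finally have "ennreal \<bar>cdf \<mu> t - cdf \<nu> t\<bar> \<le> emeasure \<nu> {t - \<epsilon><..t + \<epsilon>}"
      by (simp add: N.emeasure_eq_measure)
    also have "\<dots> = (\<integral>\<^sup>+x. indicator {t - \<epsilon><..t + \<epsilon>} x \<partial>\<nu>)"
      by (simp add: nn_integral_indicator)
    finally show ?thesis .
  qed
  have "Dw \<mu> \<nu> \<le> (\<integral>\<^sup>+t. (\<integral>\<^sup>+x. indicator {t - \<epsilon><..t + \<epsilon>} x \<partial>\<nu>) \<partial>lborel)"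
    unfolding Dw_def by (rule nn_integral_mono) (rule pt)
  also have "\<dots> = (\<integral>\<^sup>+x. (\<integral>\<^sup>+t. indicator {t - \<epsilon><..t + \<epsilon>} x \<partial>lborel) \<partial>\<nu>)"
  proof -
    interpret PS: pair_sigma_finite \<nu> lborel
      by (rule pair_sigma_finite.intro) (auto intro: N.sigma_finite_measure_axioms lborel.sigma_finite_measure_axioms)
    have sN: "sets \<nu> = sets borel" by simp
    have "(\<lambda>(x, t). indicator {t - \<epsilon><..t + \<epsilon>} x :: ennreal) = (\<lambda>xt. if snd xt - \<epsilon> < fst xt \<and> fst xt \<le> snd xt + \<epsilon> then 1 else 0)"
      by (auto simp: indicator_def fun_eq_iff)
    moreover have "(\<lambda>xt. if snd xt - \<epsilon> < fst xt \<and> fst xt \<le> snd xt + \<epsilon> then 1 else 0 :: ennreal) \<in> borel_measurable (\<nu> \<Otimes>\<^sub>M lborel)"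
      by (subst measurable_cong_sets[OF sets_pair_measure_cong[OF sN sets_lborel] refl]) measurable
    ultimately show ?thesis by (intro PS.Fubini') simp
  qed
  also have "\<dots> = (\<integral>\<^sup>+x. ennreal (2 * \<epsilon>) \<partial>\<nu>)"
  proof (rule nn_integral_cong)
    fix x
    have "(\<integral>\<^sup>+t. indicator {t - \<epsilon><..t + \<epsilon>} x \<partial>lborel) = (\<integral>\<^sup>+t. indicator {x - \<epsilon>..<x + \<epsilon>} t \<partial>lborel)"
      by (rule nn_integral_cong) (auto simp: indicator_def)
    also have "\<dots> = ennreal (2 * \<epsilon>)" using ep by simp
    finally show "(\<integral>\<^sup>+t. indicator {t - \<epsilon><..t + \<epsilon>} x \<partial>lborel) = ennreal (2 * \<epsilon>)" .
  qed
  also have "\<dots> = ennreal (2 * \<epsilon>)" using N.emeasure_space_1 by simp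
  finally show ?thesis .
qed

lemma quantile_mono:
  assumes "real_distribution \<mu>" "K \<ge> 1" "1 \<le> i" "i \<le> j" "j \<le> K"
  shows "quantile \<mu> (tau K i) \<le> quantile \<mu> (tau K j)"
proof -
  have ti: "0 < tau K i" "tau K i < 1" using tau_bounds[OF assms(2), of i] assms by auto
  have tj: "0 < tau K j" "tau K j < 1" using tau_bounds[OF assms(2), of j] assms by auto
  have "tau K j \<le> cdf \<mu> (quantile \<mu> (tau K j))"
    using quantile_galois[OF assms(1) tj] by simp
  then have "tau K i \<le> cdf \<mu> (quantile \<mu> (tau K j))"
    using tau_mono[OF assms(4), of K] by linarith
  then show ?thesis using quantile_galois[OF assms(1) ti] by simp
qed

lemma quantile_bnd:
  assumes "bnd B \<mu>" "0 < \<tau>" "\<tau> < 1"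
  shows "-B \<le> quantile \<mu> \<tau> \<and> quantile \<mu> \<tau> \<le> B"
proof -
  have rd: "real_distribution \<mu>" using assms by (simp add: bnd_def)
  have "quantile \<mu> \<tau> \<le> B"
    using quantile_galois[OF rd assms(2,3), of B] assms(1,3) by (simp add: bnd_def)
  moreover have "-B \<le> quantile \<mu> \<tau>"
  proof (rule ccontr)
    assume "\<not> ?thesis"
    then have "cdf \<mu> (quantile \<mu> \<tau>) = 0" using assms(1) by (simp add: bnd_def)
    moreover have "\<tau> \<le> cdf \<mu> (quantile \<mu> \<tau>)" using quantile_galois[OF rd assms(2,3)] by simp
    ultimately show False using assms(2) by simp
  qed
  ultimately show ?thesis by simp
qed

lemma bnd_mono: "bnd B \<mu> \<Longrightarrow> B \<le> B' \<Longrightarrow> bnd B' \<mu>"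
  unfolding bnd_def by auto



locale mdp =
  fixes \<gamma> Rmax :: real and p :: "'s::finite \<Rightarrow> 'a::finite \<Rightarrow> 's pmf"
    and \<pi> :: "'s \<Rightarrow> 'a pmf" and R :: "'s \<Rightarrow> 'a \<Rightarrow> real measure"
  assumes g0: "0 \<le> \<gamma>" and g1: "\<gamma> < 1" and Rp: "Rmax > 0"
    and rdR: "\<And>x a. real_distribution (R x a)"
    and supR: "\<And>x a. AE r in R x a. r \<in> {-Rmax..Rmax}"
begin

abbreviation "M \<equiv> Rmax / (1 - \<gamma>)"
abbreviation "H n \<equiv> horizon_return \<gamma> p \<pi> R n"
abbreviation "eps n \<equiv> 2 * M * \<gamma> ^ n"

lemma M_pos: "0 < M" using g1 Rp by simp

lemma M_eq: "Rmax + \<gamma> * M = M"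
  using g1 by (simp add: field_simps)

lemma eps_nn: "0 \<le> eps n" by (intro mult_nonneg_nonneg zero_le_power) (use M_pos g0 in auto)

lemma H_Suc: "H (Suc n) x a = dist_bellman \<gamma> p \<pi> R (H n) x a"
  by (simp add: dist_bellman_def)

lemma H_bnd: "bnd M (H n x a)"
proof (induction n arbitrary: x a)
  case 0
  have rd: "real_distribution (return borel (0::real))"
    by (auto simp: real_distribution_def real_distribution_axioms_def prob_space_return)
  have "cdf (return borel (0::real)) t = (if 0 \<le> t then 1 else 0)" for t
    unfolding cdf_def by (auto simp: measure_return)
  then show ?case using rd M_pos by (auto simp: bnd_def)
next
  case (Suc n)
  show ?case unfolding H_Suc
    using bell_bnd[of M "H n", OF Suc.IH rdR supR g0] M_eq by simp
qed

lemma H_rd: "real_distribution (H n x a)"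
  using H_bnd by (simp add: bnd_def)

lemma bnd_Lev: "bnd B \<mu> \<Longrightarrow> bnd B \<nu> \<Longrightarrow> 0 \<le> B \<Longrightarrow> Lev (2 * B) \<mu> \<nu>"
  unfolding Lev_def bnd_def
  by (smt (verit) cdf_le1 cdf_nonneg')

lemma H_Lev: "Lev (eps n) (H (n + m) x a) (H n x a)"
proof (induction n arbitrary: x a)
  case 0
  have "Lev (2 * M) (H (0 + m) x a) (H 0 x a)"
    by (rule bnd_Lev[OF H_bnd H_bnd]) (use M_pos in simp)
  then show ?case by simp
next
  case (Suc n)
  have e: "\<gamma> * eps n = eps (Suc n)" by simp
  have A: "cdf (dist_bellman \<gamma> p \<pi> R (H (n + m)) x a) t \<le> cdf (dist_bellman \<gamma> p \<pi> R (H n) x a) (t + eps (Suc n))" for t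
    unfolding e[symmetric]
    by (rule bell_levy[OF H_rd H_rd rdR g0]) (use Suc.IH in \<open>auto simp: Lev_def\<close>)
  have B: "cdf (dist_bellman \<gamma> p \<pi> R (H n) x a) t \<le> cdf (dist_bellman \<gamma> p \<pi> R (H (n + m)) x a) (t + eps (Suc n))" for t
    unfolding e[symmetric]
    by (rule bell_levy[OF H_rd H_rd rdR g0]) (use Suc.IH in \<open>auto simp: Lev_def\<close>)
  show ?case unfolding Lev_def add_Suc H_Suc using A B by blast
qed


definition G :: "'s \<Rightarrow> 'a \<Rightarrow> real \<Rightarrow> real" where
  "G x a t = (INF n. cdf (H n x a) (t + eps n))"

lemma G_bdd: "bdd_below (range (\<lambda>n. cdf (H n x a) (t + eps n)))"
  by (rule bdd_belowI[of _ 0]) (auto intro: cdf_nonneg' H_rd)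

lemma G_le: "G x a t \<le> cdf (H n x a) (t + eps n)"
  unfolding G_def by (rule cINF_lower[OF G_bdd]) simp

lemma G_nn: "0 \<le> G x a t"
  unfolding G_def by (rule cINF_greatest) (auto intro: cdf_nonneg' H_rd)

lemma G_mono: "s \<le> t \<Longrightarrow> G x a s \<le> G x a t"
proof -
  assume st: "s \<le> t"
  show ?thesis unfolding G_def[of x a t]
  proof (rule cINF_greatest)
    fix n
    have "G x a s \<le> cdf (H n x a) (s + eps n)" by (rule G_le)
    also have "\<dots> \<le> cdf (H n x a) (t + eps n)" using st by (intro cdf_mono H_rd) simp
    finally show "G x a s \<le> cdf (H n x a) (t + eps n)" .
  qed simp
qed

lemma G_ge: "cdf (H n x a) s \<le> G x a (s + eps n)"
  unfolding G_def
proof (rule cINF_greatest)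
  fix m assume "m \<in> (UNIV :: nat set)"
  show "cdf (H n x a) s \<le> cdf (H m x a) (s + eps n + eps m)"
  proof (cases "n \<le> m")
    case True
    then obtain k where m: "m = n + k" using le_Suc_ex by blast
    have "cdf (H n x a) s \<le> cdf (H (n + k) x a) (s + eps n)"
      using H_Lev[of n k x a] unfolding Lev_def by blast
    also have "\<dots> \<le> cdf (H m x a) (s + eps n + eps m)"
      unfolding m using eps_nn by (intro cdf_mono H_rd) simp
    finally show ?thesis .
  next
    case False
    then obtain k where n: "n = m + k" using le_Suc_ex[of m n] by auto
    have "cdf (H n x a) s \<le> cdf (H m x a) (s + eps m)"
      using H_Lev[of m k x a] unfolding Lev_def n by blast
    also have "\<dots> \<le> cdf (H m x a) (s + eps n + eps m)"
      using eps_nn[of n] by (intro cdf_mono H_rd) simp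
    finally show ?thesis .
  qed
qed simp

lemma eps_lim: "(\<lambda>n. eps n) \<longlonglongrightarrow> 0"
proof -
  have "(\<lambda>n. \<gamma> ^ n) \<longlonglongrightarrow> 0" using g0 g1 by (intro LIMSEQ_power_zero) simp
  then show ?thesis by (intro tendsto_mult_right_zero)
qed

lemma G_lo: "t < -M \<Longrightarrow> G x a t = 0"
proof -
  assume t: "t < -M"
  have "eventually (\<lambda>n. eps n < -M - t) sequentially"
    using eps_lim t by (intro order_tendstoD(2)) auto
  then obtain n where n: "eps n < -M - t" by (auto dest: eventually_happens)
  have "cdf (H n x a) (t + eps n) = 0"
    using H_bnd[of n x a] n unfolding bnd_def by auto
  then show ?thesis using G_le[of x a t n] G_nn[of x a t] by simp
qed

lemma G_hi: "M \<le> t \<Longrightarrow> G x a t = 1"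
proof -
  assume t: "M \<le> t"
  have c: "cdf (H n x a) (t + eps n) = 1" for n
    using H_bnd[of n x a] t eps_nn[of n] unfolding bnd_def by auto
  show ?thesis unfolding G_def c by simp
qed

lemma G_rc: "continuous (at_right t) (G x a)"
proof (subst continuous_at_right_real_increasing)
  show "\<And>x' y. x' \<le> y \<Longrightarrow> G x a x' \<le> G x a y" by (rule G_mono)
  show "\<forall>e>0. \<exists>d>0. G x a (t + d) - G x a t < e"
  proof (intro allI impI)
    fix e :: real assume e: "0 < e"
    have "(INF n. cdf (H n x a) (t + eps n)) < G x a t + e" using e by (simp add: G_def)
    then have "\<exists>n. cdf (H n x a) (t + eps n) < G x a t + e"
      by (subst (asm) cINF_less_iff[OF _ G_bdd]) auto
    then obtain n where n: "cdf (H n x a) (t + eps n) < G x a t + e" by blast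
    have "continuous (at_right (t + eps n)) (cdf (H n x a))"
      using finite_borel_measure.cdf_is_right_cont[OF real_distribution.finite_borel_measure_M[OF H_rd]] .
    then have "\<forall>e'>0. \<exists>d>0. cdf (H n x a) (t + eps n + d) - cdf (H n x a) (t + eps n) < e'"
      by (subst (asm) continuous_at_right_real_increasing) (auto intro: cdf_mono H_rd)
    moreover have "0 < G x a t + e - cdf (H n x a) (t + eps n)" using n by simp
    ultimately obtain d where d: "d > 0" "cdf (H n x a) (t + eps n + d) - cdf (H n x a) (t + eps n) < G x a t + e - cdf (H n x a) (t + eps n)"
      by blast
    have "G x a (t + d) \<le> cdf (H n x a) (t + d + eps n)" by (rule G_le)
    also have "t + d + eps n = t + eps n + d" by simp
    finally have "G x a (t + d) < G x a t + e" using d by simp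
    then show "\<exists>d>0. G x a (t + d) - G x a t < e" using d by (intro exI[of _ d]) simp
  qed
qed


definition ret :: "'s \<Rightarrow> 'a \<Rightarrow> real measure" where
  "ret x a = interval_measure (G x a)"

lemma G_bot: "(G x a \<longlongrightarrow> 0) at_bot"
proof (rule tendsto_eventually)
  show "eventually (\<lambda>t. G x a t = 0) at_bot"
    unfolding eventually_at_bot_linorder by (intro exI[of _ "-M - 1"]) (auto intro: G_lo)
qed

lemma G_top: "(G x a \<longlongrightarrow> 1) at_top"
proof (rule tendsto_eventually)
  show "eventually (\<lambda>t. G x a t = 1) at_top"
    unfolding eventually_at_top_linorder by (intro exI[of _ "M"]) (auto intro: G_hi)
qed

lemma ret_rd: "real_distribution (ret x a)"
  unfolding ret_def by (rule real_distribution_interval_measure) (auto intro: G_mono G_rc G_bot G_top)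

lemma ret_cdf: "cdf (ret x a) = G x a"
  unfolding ret_def by (rule cdf_interval_measure) (auto intro: G_mono G_rc G_bot)

lemma G_cont_lim:
  assumes "isCont (G x a) t" "f \<longlonglongrightarrow> t"
  shows "(\<lambda>n. G x a (f n)) \<longlonglongrightarrow> G x a t"
  using isCont_tendsto_compose[OF assms] .

lemma ret_weak: "weak_conv_m (\<lambda>n. H n x a) (ret x a)"
  unfolding weak_conv_m_def weak_conv_def ret_cdf
proof (intro allI impI)
  fix t assume c: "isCont (G x a) t"
  show "(\<lambda>n. cdf (H n x a) t) \<longlonglongrightarrow> G x a t"
  proof (rule tendsto_sandwich)
    show "eventually (\<lambda>n. G x a (t - eps n) \<le> cdf (H n x a) t) sequentially"
    proof (rule always_eventually, rule allI)
      fix n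
      have "G x a (t - eps n) \<le> cdf (H n x a) (t - eps n + eps n)" by (rule G_le)
      then show "G x a (t - eps n) \<le> cdf (H n x a) t" by simp
    qed
    show "eventually (\<lambda>n. cdf (H n x a) t \<le> G x a (t + eps n)) sequentially"
      using G_ge by simp
    have "(\<lambda>n. t - eps n) \<longlonglongrightarrow> t" using tendsto_diff[OF tendsto_const eps_lim, of t] by simp
    then show "(\<lambda>n. G x a (t - eps n)) \<longlonglongrightarrow> G x a t" by (rule G_cont_lim[OF c])
    have "(\<lambda>n. t + eps n) \<longlonglongrightarrow> t" using tendsto_add[OF tendsto_const eps_lim, of t] by simp
    then show "(\<lambda>n. G x a (t + eps n)) \<longlonglongrightarrow> G x a t" by (rule G_cont_lim[OF c])
  qed
qed

lemma rc_le:
  fixes f :: "real \<Rightarrow> real"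
  assumes "continuous (at_right t) f" "\<And>d. d > 0 \<Longrightarrow> c \<le> f (t + d)"
  shows "c \<le> f t"
proof (rule tendsto_lowerbound)
  show "(f \<longlongrightarrow> f t) (at_right t)" using assms(1) by (simp add: continuous_within)
  show "eventually (\<lambda>s. c \<le> f s) (at_right t)"
    unfolding eventually_at_right_field
  proof (intro exI[of _ "t + 1"] conjI allI impI)
    fix s assume "t < s" "s < t + 1"
    then show "c \<le> f s" using assms(2)[of "s - t"] by simp
  qed simp
qed simp

lemma cont_points:
  assumes "real_distribution \<nu>" "0 < d"
  shows "\<exists>s. t < s \<and> s < t + d \<and> isCont (cdf \<nu>) s"
proof -
  have "mono (cdf \<nu>)" using assms(1) by (simp add: mono_def cdf_mono)
  then have "countable {a. \<not> isCont (cdf \<nu>) a}" by (rule mono_ctble_discont)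
  moreover have "{t<..<t + d} \<noteq> {}" using assms(2) by simp
  ultimately obtain s where "s \<in> {t<..<t + d}" "s \<notin> {a. \<not> isCont (cdf \<nu>) a}"
    using open_minus_countable[of "{a. \<not> isCont (cdf \<nu>) a}" "{t<..<t + d}"] by auto
  then show ?thesis by auto
qed

lemma ret_unique:
  assumes rn: "real_distribution \<nu>" and w: "weak_conv_m (\<lambda>n. H n x a) \<nu>"
  shows "\<nu> = ret x a"
proof -
  have A1: "cdf \<nu> s \<le> G x a (s + d)" if c: "isCont (cdf \<nu>) s" and d: "0 < d" for s d
  proof (rule tendsto_upperbound)
    show "(\<lambda>n. cdf (H n x a) s) \<longlonglongrightarrow> cdf \<nu> s" using w c unfolding weak_conv_m_def weak_conv_def by blast
    have "eventually (\<lambda>n. eps n < d) sequentially" using eps_lim d by (intro order_tendstoD(2)) auto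
    then show "eventually (\<lambda>n. cdf (H n x a) s \<le> G x a (s + d)) sequentially"
    proof eventually_elim
      case (elim n)
      have "cdf (H n x a) s \<le> G x a (s + eps n)" by (rule G_ge)
      also have "\<dots> \<le> G x a (s + d)" using elim by (intro G_mono) simp
      finally show ?case .
    qed
  qed simp
  have A2: "G x a (s - d) \<le> cdf \<nu> s" if c: "isCont (cdf \<nu>) s" and d: "0 < d" for s d
  proof (rule tendsto_lowerbound)
    show "(\<lambda>n. cdf (H n x a) s) \<longlonglongrightarrow> cdf \<nu> s" using w c unfolding weak_conv_m_def weak_conv_def by blast
    have "eventually (\<lambda>n. eps n < d) sequentially" using eps_lim d by (intro order_tendstoD(2)) auto
    then show "eventually (\<lambda>n. G x a (s - d) \<le> cdf (H n x a) s) sequentially"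
    proof eventually_elim
      case (elim n)
      have "G x a (s - d) \<le> G x a (s - eps n)" using elim by (intro G_mono) simp
      also have "\<dots> \<le> cdf (H n x a) (s - eps n + eps n)" by (rule G_le)
      finally show ?case by simp
    qed
  qed simp
  have "cdf \<nu> t = G x a t" for t
  proof (rule antisym)
    show "cdf \<nu> t \<le> G x a t"
    proof (rule rc_le[OF G_rc])
      fix d :: real assume d: "0 < d"
      obtain s where s: "t < s" "s < t + d / 2" "isCont (cdf \<nu>) s" using cont_points[OF rn, of "d / 2" t] d by auto
      have "cdf \<nu> t \<le> cdf \<nu> s" using s by (intro cdf_mono rn) simp
      also have "\<dots> \<le> G x a (s + d / 2)" using A1[OF s(3)] d by simp
      also have "\<dots> \<le> G x a (t + d)" using s by (intro G_mono) simp
      finally show "cdf \<nu> t \<le> G x a (t + d)" .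
    qed
    show "G x a t \<le> cdf \<nu> t"
    proof (rule rc_le[where f="cdf \<nu>"])
      show "continuous (at_right t) (cdf \<nu>)"
        using finite_borel_measure.cdf_is_right_cont[OF real_distribution.finite_borel_measure_M[OF rn]] .
      fix d :: real assume d: "0 < d"
      obtain s where s: "t < s" "s < t + d" "isCont (cdf \<nu>) s" using cont_points[OF rn d, of t] by auto
      have "G x a t = G x a (s - (s - t))" by simp
      also have "\<dots> \<le> cdf \<nu> s" using A2[OF s(3), of "s - t"] s by simp
      also have "\<dots> \<le> cdf \<nu> (t + d)" using s by (intro cdf_mono rn) simp
      finally show "G x a t \<le> cdf \<nu> (t + d)" .
    qed
  qed
  then have "cdf \<nu> = cdf (ret x a)" by (simp add: ret_cdf fun_eq_iff)
  then show ?thesis by (rule cdf_unique[OF rn ret_rd])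
qed

lemma return_dist_eq: "return_dist \<gamma> p \<pi> R x a = ret x a"
  unfolding return_dist_def
proof (rule the_equality)
  show "real_distribution (ret x a) \<and> weak_conv_m (\<lambda>n. H n x a) (ret x a)"
    using ret_rd ret_weak by blast
  show "\<And>\<nu>. real_distribution \<nu> \<and> weak_conv_m (\<lambda>n. H n x a) \<nu> \<Longrightarrow> \<nu> = ret x a"
    using ret_unique by blast
qed

lemma ret_bnd: "bnd M (ret x a)"
  unfolding bnd_def ret_cdf using ret_rd G_lo G_hi by auto

lemma ret_Lev: "Lev (eps n) (ret x a) (H n x a)"
  unfolding Lev_def ret_cdf using G_le G_ge by blast

end


lemma aux_alg2: "m / k + (c + m / k) = 2 * m / k + (c::real)"
  by (simp add: add_divide_distrib[symmetric])

lemma aux_alg: "k \<noteq> 0 \<Longrightarrow> 1 - g \<noteq> 0 \<Longrightarrow> g * (m / (k * (1 - g))) + m / k = m / (k * (1 - g::real))"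
  by (simp add: field_simps)

locale qfix = mdp \<gamma> Rmax p \<pi> R
  for \<gamma> Rmax :: real and p :: "'s::finite \<Rightarrow> 'a::finite \<Rightarrow> 's pmf"
    and \<pi> :: "'s \<Rightarrow> 'a pmf" and R :: "'s \<Rightarrow> 'a \<Rightarrow> real measure" +
  fixes K :: nat and z :: "'s \<Rightarrow> 'a \<Rightarrow> nat \<Rightarrow> real"
  assumes K1: "K \<ge> 1"
    and fp: "\<And>x a. unif_dirac K (z x a) =
           proj_W1 K (dist_bellman \<gamma> p \<pi> R (\<lambda>x' a'. unif_dirac K (z x' a')) x a)"
begin

abbreviation "eh x a \<equiv> unif_dirac K (z x a)"
abbreviation "Teh x a \<equiv> dist_bellman \<gamma> p \<pi> R (\<lambda>x' a'. unif_dirac K (z x' a')) x a"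

lemma eh_rd: "real_distribution (eh x a)" by (rule real_distribution_unif)

lemma eh_bnd: "bnd M (eh x a)"
proof -
  define S where "S = (\<lambda>(x, a, k). \<bar>z x a k\<bar>) ` (UNIV \<times> UNIV \<times> {1..K})"
  define Bz where "Bz = Max S"
  have fS: "finite S" unfolding S_def by simp
  have neS: "S \<noteq> {}" unfolding S_def using K1 by auto
  have zle: "\<bar>z x a k\<bar> \<le> Bz" if "k \<in> {1..K}" for x a k
    unfolding Bz_def using that by (intro Max_ge[OF fS]) (unfold S_def, rule image_eqI[of _ _ "(x, a, k)"], auto)
  have Bz0: "0 \<le> Bz" using zle[of 1] K1 by (meson abs_ge_zero atLeastAtMost_iff order_trans le_refl)
  have bz: "bnd Bz (eh x a)" for x a
  proof -
    have lo: "cdf (eh x a) t = 0" if t: "t < -Bz" for t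
    proof -
      have "{k\<in>{1..K}. z x a k \<le> t} = {}" using zle[of _ x a] t by (force simp: abs_le_iff)
      then show ?thesis unfolding cdf_unif[OF K1] by simp
    qed
    have hi: "cdf (eh x a) t = 1" if t: "Bz \<le> t" for t
    proof -
      have "{k\<in>{1..K}. z x a k \<le> t} = {1..K}" using zle[of _ x a] t by (force simp: abs_le_iff)
      then show ?thesis unfolding cdf_unif[OF K1] using K1 by simp
    qed
    show ?thesis unfolding bnd_def using lo hi eh_rd by auto
  qed
  have tb: "bnd (Rmax + \<gamma> * Bz) (Teh x a)" for x a
    by (rule bell_bnd[OF bz rdR supR g0])
  have zb: "\<bar>z x a k0\<bar> \<le> Rmax + \<gamma> * Bz" if k0: "k0 \<in> {1..K}" for x a k0
  proof -
    let ?q = "\<lambda>k. quantile (Teh x a) (tau K k)"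
    have "0 < card {k\<in>{1..K}. z x a k \<in> {z x a k0}}"
      using k0 by (auto simp: card_gt_0_iff)
    then have "0 < measure (eh x a) {z x a k0}"
      using K1 by (simp add: measure_unif[OF K1])
    also have "measure (eh x a) {z x a k0} = measure (unif_dirac K ?q) {z x a k0}"
      using fp[of x a] unfolding proj_W1_def by simp
    also have "\<dots> = card {k\<in>{1..K}. ?q k \<in> {z x a k0}} / K"
      by (rule measure_unif[OF K1]) simp
    finally have "0 < real (card {k\<in>{1..K}. ?q k \<in> {z x a k0}}) / K" .
    then have "card {k\<in>{1..K}. ?q k \<in> {z x a k0}} \<noteq> 0"
      by (metis div_0 less_irrefl of_nat_0)
    then have "{k\<in>{1..K}. ?q k \<in> {z x a k0}} \<noteq> {}" by (metis card.empty)
    then obtain k where k: "k \<in> {1..K}" "?q k = z x a k0" by auto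
    have "0 < tau K k" "tau K k < 1" using tau_bounds[OF K1 k(1)] by auto
    then have "- (Rmax + \<gamma> * Bz) \<le> ?q k \<and> ?q k \<le> Rmax + \<gamma> * Bz"
      by (intro quantile_bnd[OF tb])
    then show ?thesis using k by (simp add: abs_le_iff)
  qed
  have "Bz \<in> S" unfolding Bz_def by (rule Max_in[OF fS neS])
  then obtain x0 a0 k0 where "k0 \<in> {1..K}" "Bz = \<bar>z x0 a0 k0\<bar>" unfolding S_def by auto
  then have "Bz \<le> Rmax + \<gamma> * Bz" using zb by simp
  then have "Bz * (1 - \<gamma>) \<le> Rmax" by (simp add: algebra_simps)
  then have "Bz \<le> M" using g1 by (simp add: pos_le_divide_eq)
  then show ?thesis using bz bnd_mono by blast
qed

lemma Teh_bnd: "bnd M (Teh x a)"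
  using bell_bnd[of M "\<lambda>x a. eh x a", OF eh_bnd rdR supR g0] M_eq by simp

lemma Teh_rd: "real_distribution (Teh x a)"
  using Teh_bnd by (simp add: bnd_def)

abbreviation "C \<equiv> M / (K * (1 - \<gamma>))"

lemma C_nn: "0 \<le> C" using M_pos g1 Rp by (intro divide_nonneg_nonneg mult_nonneg_nonneg) auto

lemma H_eh: "Dw (H n x a) (eh x a) \<le> ennreal (2 * M * \<gamma> ^ n + C)"
proof (induction n arbitrary: x a)
  case 0
  have "Dw (H 0 x a) (eh x a) \<le> ennreal (2 * M)"
    by (rule Dw_bnd[OF H_bnd eh_bnd]) (use M_pos in simp)
  also have "\<dots> \<le> ennreal (2 * M * \<gamma> ^ 0 + C)" using C_nn by (intro ennreal_leI) simp
  finally show ?case .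
next
  case (Suc n)
  have "Dw (H (Suc n) x a) (eh x a) \<le> Dw (H (Suc n) x a) (Teh x a) + Dw (Teh x a) (eh x a)"
    by (rule Dw_tri[OF H_rd eh_rd Teh_rd])
  also have "Dw (H (Suc n) x a) (Teh x a) \<le> ennreal \<gamma> * ennreal (2 * M * \<gamma> ^ n + C)"
    unfolding H_Suc by (rule bell_contr[OF H_rd eh_rd rdR g0 Suc.IH])
  also have "Dw (Teh x a) (eh x a) \<le> ennreal (M / K)"
  proof -
    have "Dw (Teh x a) (eh x a) = Dw (proj_W1 K (Teh x a)) (Teh x a)"
      using fp[of x a] by (simp add: Dw_sym)
    also have "\<dots> \<le> ennreal (M / K)" by (rule proj_close[OF Teh_bnd K1]) (use M_pos in simp)
    finally show ?thesis .
  qed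
  also have "ennreal \<gamma> * ennreal (2 * M * \<gamma> ^ n + C) + ennreal (M / K) = ennreal (2 * M * \<gamma> ^ Suc n + C)"
  proof -
    have nz1: "1 - \<gamma> \<noteq> 0" using g1 by simp
    have nzK: "real K \<noteq> 0" using K1 by simp
    have "\<gamma> * C + M / K = C" using aux_alg[OF nzK nz1] .
    then have "\<gamma> * (2 * M * \<gamma> ^ n + C) + M / K = 2 * M * \<gamma> ^ Suc n + C"
      by (simp add: algebra_simps)
    moreover have "0 \<le> 2 * M * \<gamma> ^ n + C" using C_nn eps_nn[of n] by simp
    ultimately have X0: "0 \<le> 2 * M * \<gamma> ^ n + C" and eqr: "\<gamma> * (2 * M * \<gamma> ^ n + C) + M / K = 2 * M * \<gamma> ^ Suc n + C"
      by auto
    have A0: "0 \<le> \<gamma> * (2 * M * \<gamma> ^ n + C)" using X0 g0 by simp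
    have B0: "0 \<le> M / K" using M_pos Rp g1 by (intro divide_nonneg_nonneg) auto
    have "ennreal \<gamma> * ennreal (2 * M * \<gamma> ^ n + C) = ennreal (\<gamma> * (2 * M * \<gamma> ^ n + C))"
      using g0 X0 by (simp add: ennreal_mult)
    then have "ennreal \<gamma> * ennreal (2 * M * \<gamma> ^ n + C) + ennreal (M / K) = ennreal (\<gamma> * (2 * M * \<gamma> ^ n + C) + M / K)"
      using ennreal_plus[OF A0 B0] by simp
    then show ?thesis unfolding eqr .
  qed
  finally show ?case by (simp add: add_mono)
qed

lemma ret_eh: "Dw (ret x a) (eh x a) \<le> ennreal C"
proof -
  have fin: "Dw (ret x a) (eh x a) \<le> ennreal (2 * M)"
    by (rule Dw_bnd[OF ret_bnd eh_bnd]) (use M_pos in simp)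
  then obtain d where d: "Dw (ret x a) (eh x a) = ennreal d" "0 \<le> d"
    by (metis ennreal_cases ennreal_less_top leD top_greatest order_le_less)
  have "d \<le> 6 * M * \<gamma> ^ n + C" for n
  proof -
    have "Dw (ret x a) (eh x a) \<le> Dw (ret x a) (H n x a) + Dw (H n x a) (eh x a)"
      by (rule Dw_tri[OF ret_rd eh_rd H_rd])
    also have "\<dots> \<le> ennreal (2 * eps n) + ennreal (2 * M * \<gamma> ^ n + C)"
      by (intro add_mono Lev_Dw[OF ret_rd H_rd eps_nn ret_Lev] H_eh)
    also have "\<dots> = ennreal (6 * M * \<gamma> ^ n + C)"
      using eps_nn[of n] C_nn by (simp add: ennreal_plus[symmetric] del: ennreal_plus)
    finally have "ennreal d \<le> ennreal (6 * M * \<gamma> ^ n + C)" using d by simp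
    moreover have "0 \<le> 6 * M * \<gamma> ^ n + C"
      by (intro add_nonneg_nonneg mult_nonneg_nonneg zero_le_power C_nn) (use M_pos g0 in auto)
    ultimately show ?thesis by (simp add: ennreal_le_iff)
  qed
  moreover have "(\<lambda>n. 6 * M * \<gamma> ^ n + C) \<longlonglongrightarrow> C"
  proof -
    have "(\<lambda>n. \<gamma> ^ n) \<longlonglongrightarrow> 0" using g0 g1 by (intro LIMSEQ_power_zero) simp
    then have "(\<lambda>n. 6 * M * \<gamma> ^ n) \<longlonglongrightarrow> 0" by (intro tendsto_mult_right_zero)
    then show ?thesis using tendsto_add[OF _ tendsto_const, of _ 0 sequentially C] by simp
  qed
  ultimately have "d \<le> C" by (intro LIMSEQ_le_const[of _ C d] ) auto
  then show ?thesis using d by (simp add: ennreal_leI)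
qed


lemma proj_rd: "real_distribution (proj_W1 K \<mu>)"
  unfolding proj_W1_def by (rule real_distribution_unif)

lemma final_xa:
  "(1 / real K) * (\<Sum>k = 1..K. \<bar>quantile (return_dist \<gamma> p \<pi> R x a) (tau K k)
      - quantile (unif_dirac K (z x a)) (tau K k)\<bar>) \<le> 2 * M / K + C"
proof -
  let ?Q = "(1 / real K) * (\<Sum>k = 1..K. \<bar>quantile (ret x a) (tau K k) - quantile (eh x a) (tau K k)\<bar>)"
  have e1: "Dw (proj_W1 K (ret x a)) (proj_W1 K (eh x a)) = ennreal ?Q"
    unfolding proj_W1_def by (rule Dw_sorted[OF K1]) (auto intro: quantile_mono ret_rd eh_rd K1)
  have MK: "0 \<le> M / K" using M_pos Rp g1 by (intro divide_nonneg_nonneg) auto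
  have "Dw (proj_W1 K (ret x a)) (proj_W1 K (eh x a))
      \<le> Dw (proj_W1 K (ret x a)) (ret x a) + Dw (ret x a) (proj_W1 K (eh x a))"
    by (rule Dw_tri[OF proj_rd proj_rd ret_rd])
  also have "Dw (ret x a) (proj_W1 K (eh x a)) \<le> Dw (ret x a) (eh x a) + Dw (eh x a) (proj_W1 K (eh x a))"
    by (rule Dw_tri[OF ret_rd proj_rd eh_rd])
  also have "Dw (proj_W1 K (ret x a)) (ret x a) \<le> ennreal (M / K)"
    by (rule proj_close[OF ret_bnd K1]) (use M_pos in simp)
  also have "Dw (ret x a) (eh x a) \<le> ennreal C" by (rule ret_eh)
  also have "Dw (eh x a) (proj_W1 K (eh x a)) \<le> ennreal (M / K)"
    unfolding Dw_sym[of "eh x a"] by (rule proj_close[OF eh_bnd K1]) (use M_pos in simp)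
  also have "ennreal (M / K) + (ennreal C + ennreal (M / K)) = ennreal (2 * M / K + C)"
  proof -
    have q1: "ennreal C + ennreal (M / K) = ennreal (C + M / K)" by (rule ennreal_plus[OF C_nn MK, symmetric])
    have q2: "ennreal (M / K) + ennreal (C + M / K) = ennreal (M / K + (C + M / K))"
      using C_nn MK by (intro ennreal_plus[symmetric]) auto
    have "ennreal (M / K) + (ennreal C + ennreal (M / K)) = ennreal (M / K) + ennreal (C + M / K)"
      by (simp only: q1)
    also have "\<dots> = ennreal (M / K + (C + M / K))" by (rule q2)
    also have "M / K + (C + M / K) = 2 * M / K + C" by (rule aux_alg2)
    finally show ?thesis .
  qed
  finally have "ennreal ?Q \<le> ennreal (2 * M / K + C)" unfolding e1 by (simp add: add_mono)
  moreover have "0 \<le> 2 * M / K + C" using MK C_nn by simp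
  ultimately have "?Q \<le> 2 * M / K + C" by (simp add: ennreal_le_iff)
  then show ?thesis unfolding return_dist_eq .
qed

end


lemma num_bound:
  fixes r g :: real and k :: nat
  assumes "0 < r" "0 \<le> g" "g < 1" "k \<ge> 1"
  shows "2 * (r / (1 - g)) / k + (r / (1 - g)) / (k * (1 - g)) \<le> 2 * r * (5 - 2 * g) / ((1 - g)^2 * k)"
proof -
  define u where "u = 1 - g"
  have nz: "u \<noteq> 0" "real k \<noteq> 0" using assms by (auto simp: u_def)
  have "2 * (r / u) / k + (r / u) / (k * u) = r * (2 * u + 1) / (u^2 * k)"
    using nz by (simp add: field_simps power2_eq_square)
  then have "2 * (r / (1 - g)) / k + (r / (1 - g)) / (k * (1 - g)) = r * (3 - 2 * g) / ((1 - g)^2 * k)"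
    unfolding u_def by (simp add: algebra_simps)
  also have "\<dots> \<le> 2 * r * (5 - 2 * g) / ((1 - g)^2 * k)"
  proof (rule divide_right_mono)
    have "r * (3 - 2 * g) \<le> r * (2 * (5 - 2 * g))" using assms by (intro mult_left_mono) auto
    also have "r * (2 * (5 - 2 * g)) = 2 * r * (5 - 2 * g)" by simp
    finally show "r * (3 - 2 * g) \<le> 2 * r * (5 - 2 * g)" .
    show "0 \<le> (1 - g)^2 * real k" by simp
  qed
  finally show ?thesis .
qed

theorem theorem3:
  fixes \<gamma> Rmax :: real and K :: nat
    and p :: "'s::finite \<Rightarrow> 'a::finite \<Rightarrow> 's pmf"
    and \<pi> :: "'s \<Rightarrow> 'a pmf"
    and R :: "'s \<Rightarrow> 'a \<Rightarrow> real measure"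
    and z :: "'s \<Rightarrow> 'a \<Rightarrow> nat \<Rightarrow> real"
  assumes "0 \<le> \<gamma>" and "\<gamma> < 1" and "Rmax > 0" and "K \<ge> 1"
    and "\<And>x a. real_distribution (R x a)"
    and "\<And>x a. AE r in R x a. r \<in> {-Rmax..Rmax}"
    and "\<And>x a. unif_dirac K (z x a) =
           proj_W1 K (dist_bellman \<gamma> p \<pi> R (\<lambda>x' a'. unif_dirac K (z x' a')) x a)"
  shows "(SUP (x, a) \<in> UNIV.
           (1 / real K) * (\<Sum>k = 1..K.
              \<bar>quantile (return_dist \<gamma> p \<pi> R x a) (tau K k)
               - quantile (unif_dirac K (z x a)) (tau K k)\<bar>))
         \<le> 2 * Rmax * (5 - 2 * \<gamma>) / ((1 - \<gamma>)^2 * real K)"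
proof -
  interpret qfix \<gamma> Rmax p \<pi> R K z
    by (intro qfix.intro mdp.intro qfix_axioms.intro) (rule assms)+
  show ?thesis
  proof (rule cSUP_least)
    fix xa :: "'s \<times> 'a"
    obtain x a where xa: "xa = (x, a)" by (cases xa)
    have "(1 / real K) * (\<Sum>k = 1..K. \<bar>quantile (return_dist \<gamma> p \<pi> R x a) (tau K k)
      - quantile (unif_dirac K (z x a)) (tau K k)\<bar>) \<le> 2 * M / K + C"
      by (rule final_xa)
    also have "\<dots> \<le> 2 * Rmax * (5 - 2 * \<gamma>) / ((1 - \<gamma>)^2 * real K)"
      by (rule num_bound[OF assms(3,1,2,4)])
    finally have fin: "(1 / real K) * (\<Sum>k = 1..K. \<bar>quantile (return_dist \<gamma> p \<pi> R x a) (tau K k)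
      - quantile (unif_dirac K (z x a)) (tau K k)\<bar>) \<le> 2 * Rmax * (5 - 2 * \<gamma>) / ((1 - \<gamma>)^2 * real K)" .
    show "(case xa of (x, a) \<Rightarrow> (1 / real K) * (\<Sum>k = 1..K. \<bar>quantile (return_dist \<gamma> p \<pi> R x a) (tau K k)
      - quantile (unif_dirac K (z x a)) (tau K k)\<bar>)) \<le> 2 * Rmax * (5 - 2 * \<gamma>) / ((1 - \<gamma>)^2 * real K)"
      unfolding xa prod.case by (rule fin)
  qed simp
qed

end
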